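(* Let $\mathrm{G}_0$ be a real form of a complex semisimple Lie group, with a given Iwasawa factorization $\mathrm{G}_0=\mathrm{K}_0\mathrm{A}_0\mathrm{N}_0$. Then the Toda vector field on $\mathfrak{g}_0$ is invariant under conjugation by elements of $\mathrm{M}_0=\mathrm{Z}_{\mathrm{K}_0}(\mathfrak{a}_0)$: for every $m\in\mathrm{M}_0$, the map $X\mapsto mXm^{-1}$ on $\mathfrak{g}_0$ maps the Toda vector field to itself.
   Context: A real form $\mathrm{G}_0$ of a connected complex semisimple Lie group $\mathrm{G}$ is the fixed-point set of an anti-holomorphic group involution; $\mathfrak{g}_0$ is its Lie algebra. An Iwasawa factorization of $\mathrm{G}_0$ is given by a Cartan involution of $\mathrm{G}_0$ with fixed-point set $\mathrm{K}_0$ and decomposition $\mathfrak{g}_0=\mathfrak{k}_0\oplus\mathfrak{p}_0$, a maximal abelian subspace $\mathfrak{a}_0\subset\mathfrak{p}_0$, and an ordering of the restricted roots of $(\mathfrak{g}_0,\mathfrak{a}_0)$; $\mathfrak{n}_0$ is the sum of the positive restricted root spaces, $\mathrm{A}_0,\mathrm{N}_0$ the connected subgroups integrating $\mathfrak{a}_0,\mathfrak{n}_0$, and $\mathfrak{u}_0=\mathfrak{a}_0\oplus\mathfrak{n}_0$, so $\mathfrak{g}_0=\mathfrak{k}_0\oplus\mathfrak{u}_0$. The Toda vector field on $\mathfrak{g}_0$ is $X'=[X,\pi_{\mathfrak{k}_0}X]$ with $\pi_{\mathfrak{k}_0}$ the projection onto $\mathfrak{k}_0$ along $\mathfrak{u}_0$.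 $\mathrm{Z}_{\mathrm{K}_0}(\mathfrak{a}_0)=\{k\in\mathrm{K}_0: kXk^{-1}=X\ \forall X\in\mathfrak{a}_0\}$. *)

theory Defs
  imports "HOL-Analysis.Analysis"
begin

text \<open>Complex Lie groups are realised as closed subgroups of GL(n,C), i.e. sets of
  matrices of type complex^'n^'n (matrix product **, inverse matrix_inv).
  Every connected complex semisimple Lie group admits such a realisation.\<close>

type_synonym 'n cmat = "complex^'n^'n"

primrec mpow :: "'n::finite cmat \<Rightarrow> nat \<Rightarrow> 'n cmat" where
  "mpow X 0 = mat 1"
| "mpow X (Suc k) = X ** mpow X k"

definition mexp :: "'n::finite cmat \<Rightarrow> 'n cmat" where
  "mexp X = (\<Sum>k. (1 / fact k) *\<^sub>R mpow X k)"

definition comm :: "'n::finite cmat \<Rightarrow> 'n cmat \<Rightarrow> 'n cmat" where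
  "comm X Y = X ** Y - Y ** X"

definition cmul :: "complex \<Rightarrow> 'n::finite cmat \<Rightarrow> 'n cmat" where
  "cmul c X = (\<chi> i j. c * X $ i $ j)"

definition lie_alg :: "'n::finite cmat set \<Rightarrow> 'n cmat set" where
  "lie_alg G = {X. \<forall>t::real. mexp (t *\<^sub>R X) \<in> G}"

definition closed_matrix_group :: "'n::finite cmat set \<Rightarrow> bool" where
  "closed_matrix_group G \<longleftrightarrow> G \<subseteq> {A. invertible A} \<and> mat 1 \<in> G
     \<and> (\<forall>a\<in>G. \<forall>b\<in>G. a ** b \<in> G) \<and> (\<forall>a\<in>G. matrix_inv a \<in> G) \<and> closed G"

definition lie_subalg :: "'n::finite cmat set \<Rightarrow> bool" where
  "lie_subalg L \<longleftrightarrow> subspace L \<and> (\<forall>X\<in>L. \<forall>Y\<in>L. comm X Y \<in> L)"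

definition lie_ideal :: "'n::finite cmat set \<Rightarrow> 'n cmat set \<Rightarrow> bool" where
  "lie_ideal L I \<longleftrightarrow> subspace I \<and> I \<subseteq> L \<and> (\<forall>X\<in>L. \<forall>Y\<in>I. comm X Y \<in> I)"

definition derived :: "'n::finite cmat set \<Rightarrow> 'n cmat set" where
  "derived I = span {comm X Y | X Y. X \<in> I \<and> Y \<in> I}"

definition lie_solvable :: "'n::finite cmat set \<Rightarrow> bool" where
  "lie_solvable I \<longleftrightarrow> (\<exists>k. (derived ^^ k) I = {0})"

definition semisimple :: "'n::finite cmat set \<Rightarrow> bool" where
  "semisimple L \<longleftrightarrow> lie_subalg L \<and> (\<forall>I. lie_ideal L I \<and> lie_solvable I \<longrightarrow> I = {0})"

definition killing :: "'n::finite cmat set \<Rightarrow> 'n cmat \<Rightarrow> 'n cmat \<Rightarrow> real" where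
  "killing L X Y =
     (let B = (SOME B. B \<subseteq> L \<and> independent B \<and> L \<subseteq> span B)
      in \<Sum>b\<in>B. representation B (comm X (comm Y b)) b)"

definition complex_semisimple_group :: "'n::finite cmat set \<Rightarrow> bool" where
  "complex_semisimple_group G \<longleftrightarrow> closed_matrix_group G \<and> connected G
     \<and> (\<forall>X\<in>lie_alg G. \<forall>c. cmul c X \<in> lie_alg G) \<and> semisimple (lie_alg G)"

definition group_hom_on :: "'n::finite cmat set \<Rightarrow> ('n cmat \<Rightarrow> 'n cmat) \<Rightarrow> bool" where
  "group_hom_on G f \<longleftrightarrow> f ` G \<subseteq> G \<and> (\<forall>a\<in>G. \<forall>b\<in>G. f (a ** b) = f a ** f b)
      \<and> continuous_on G f"

definition is_differential ::
  "'n::finite cmat set \<Rightarrow> ('n cmat \<Rightarrow> 'n cmat) \<Rightarrow> ('n cmat \<Rightarrow> 'n cmat) \<Rightarrow> bool" where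
  "is_differential G f L \<longleftrightarrow>
     (\<forall>X\<in>lie_alg G. L X \<in> lie_alg G \<and> (\<forall>t::real. f (mexp (t *\<^sub>R X)) = mexp (t *\<^sub>R L X)))"

definition antiholo_involution :: "'n::finite cmat set \<Rightarrow> ('n cmat \<Rightarrow> 'n cmat) \<Rightarrow> bool" where
  "antiholo_involution G \<sigma> \<longleftrightarrow> group_hom_on G \<sigma> \<and> (\<forall>a\<in>G. \<sigma> (\<sigma> a) = a)
     \<and> (\<exists>L. is_differential G \<sigma> L \<and> (\<forall>X\<in>lie_alg G. L (cmul \<i> X) = cmul (- \<i>) (L X)))"

definition fixed_points :: "'n::finite cmat set \<Rightarrow> ('n cmat \<Rightarrow> 'n cmat) \<Rightarrow> 'n cmat set" where
  "fixed_points G f = {a\<in>G. f a = a}"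

definition cartan_involution_alg :: "'n::finite cmat set \<Rightarrow> ('n cmat \<Rightarrow> 'n cmat) \<Rightarrow> bool" where
  "cartan_involution_alg g0 \<theta> \<longleftrightarrow>
     (\<forall>X\<in>g0. \<theta> X \<in> g0 \<and> \<theta> (\<theta> X) = X)
   \<and> (\<forall>X\<in>g0. \<forall>Y\<in>g0. \<theta> (X + Y) = \<theta> X + \<theta> Y \<and> \<theta> (comm X Y) = comm (\<theta> X) (\<theta> Y))
   \<and> (\<forall>X\<in>g0. \<forall>c::real. \<theta> (c *\<^sub>R X) = c *\<^sub>R \<theta> X)
   \<and> (\<forall>X\<in>g0. X \<noteq> 0 \<longrightarrow> - killing g0 X (\<theta> X) > 0)"

definition cartan_involution_grp ::
  "'n::finite cmat set \<Rightarrow> ('n cmat \<Rightarrow> 'n cmat) \<Rightarrow> ('n cmat \<Rightarrow> 'n cmat) \<Rightarrow> bool" where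
  "cartan_involution_grp G0 \<Theta> \<theta> \<longleftrightarrow> group_hom_on G0 \<Theta> \<and> (\<forall>a\<in>G0. \<Theta> (\<Theta> a) = a)
     \<and> is_differential G0 \<Theta> \<theta> \<and> cartan_involution_alg (lie_alg G0) \<theta>"

definition kpart :: "'n::finite cmat set \<Rightarrow> ('n cmat \<Rightarrow> 'n cmat) \<Rightarrow> 'n cmat set" where
  "kpart g0 \<theta> = {X\<in>g0. \<theta> X = X}"

definition ppart :: "'n::finite cmat set \<Rightarrow> ('n cmat \<Rightarrow> 'n cmat) \<Rightarrow> 'n cmat set" where
  "ppart g0 \<theta> = {X\<in>g0. \<theta> X = - X}"

definition abelian :: "'n::finite cmat set \<Rightarrow> bool" where
  "abelian a \<longleftrightarrow> (\<forall>X\<in>a. \<forall>Y\<in>a. comm X Y = 0)"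

definition max_abelian_in :: "'n::finite cmat set \<Rightarrow> 'n cmat set \<Rightarrow> bool" where
  "max_abelian_in p a \<longleftrightarrow> subspace a \<and> a \<subseteq> p \<and> abelian a
     \<and> (\<forall>b. subspace b \<and> a \<subseteq> b \<and> b \<subseteq> p \<and> abelian b \<longrightarrow> b = a)"

text \<open>Functionals on a0 are represented by functions vanishing outside a0.\<close>
definition root_space ::
  "'n::finite cmat set \<Rightarrow> 'n cmat set \<Rightarrow> ('n cmat \<Rightarrow> real) \<Rightarrow> 'n cmat set" where
  "root_space g0 a r = {X\<in>g0. \<forall>H\<in>a. comm H X = r H *\<^sub>R X}"

definition restricted_root ::
  "'n::finite cmat set \<Rightarrow> 'n cmat set \<Rightarrow> ('n cmat \<Rightarrow> real) \<Rightarrow> bool" where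
  "restricted_root g0 a r \<longleftrightarrow>
     (\<forall>H. H \<notin> a \<longrightarrow> r H = 0)
   \<and> (\<forall>H\<in>a. \<forall>H'\<in>a. r (H + H') = r H + r H')
   \<and> (\<forall>H\<in>a. \<forall>c. r (c *\<^sub>R H) = c * r H)
   \<and> (\<exists>H\<in>a. r H \<noteq> 0)
   \<and> root_space g0 a r \<noteq> {0}"

text \<open>An ordering of the restricted roots, given by a regular element H0 of a0:
  the positive roots are those with lambda(H0) > 0.\<close>
definition regular_element :: "'n::finite cmat set \<Rightarrow> 'n cmat set \<Rightarrow> 'n cmat \<Rightarrow> bool" where
  "regular_element g0 a H0 \<longleftrightarrow> H0 \<in> a \<and> (\<forall>r. restricted_root g0 a r \<longrightarrow> r H0 \<noteq> 0)"

definition npart :: "'n::finite cmat set \<Rightarrow> 'n cmat set \<Rightarrow> 'n cmat \<Rightarrow> 'n cmat set" where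
  "npart g0 a H0 = span (\<Union>{root_space g0 a r | r. restricted_root g0 a r \<and> r H0 > 0})"

definition upart :: "'n::finite cmat set \<Rightarrow> 'n cmat set \<Rightarrow> 'n cmat \<Rightarrow> 'n cmat set" where
  "upart g0 a H0 = {A + N | A N. A \<in> a \<and> N \<in> npart g0 a H0}"

definition proj_k :: "'n::finite cmat set \<Rightarrow> 'n cmat set \<Rightarrow> 'n cmat \<Rightarrow> 'n cmat" where
  "proj_k k u X = (THE K. K \<in> k \<and> X - K \<in> u)"

definition toda :: "'n::finite cmat set \<Rightarrow> 'n cmat set \<Rightarrow> 'n cmat \<Rightarrow> 'n cmat" where
  "toda k u X = comm X (proj_k k u X)"

end

theory Submission
  imports Defs
begin

typedef (overloaded) ('n::finite) M = "UNIV :: 'n cmat set" by auto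

setup_lifting type_definition_M

lemma mvec_linear:
  fixes X :: "'n::finite cmat"
  shows "bounded_linear (\<lambda>v::complex^'n. X *v v)"
proof -
  have "linear (\<lambda>v::complex^'n. X *v v)"
    by (rule linearI) (simp_all add: vec_eq_iff matrix_vector_mult_def
        scaleR_sum_right distrib_left sum.distrib)
  then show ?thesis by (simp add: linear_conv_bounded_linear)
qed

instantiation M :: (finite) ab_group_add
begin
lift_definition zero_M :: "'a M" is 0 .
lift_definition plus_M :: "'a M \<Rightarrow> 'a M \<Rightarrow> 'a M" is "(+)" .
lift_definition minus_M :: "'a M \<Rightarrow> 'a M \<Rightarrow> 'a M" is "(-)" .
lift_definition uminus_M :: "'a M \<Rightarrow> 'a M" is "uminus" .
instance by standard (transfer, simp add: algebra_simps)+
end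

instantiation M :: (finite) real_vector
begin
lift_definition scaleR_M :: "real \<Rightarrow> 'a M \<Rightarrow> 'a M" is "scaleR" .
instance by standard (transfer, simp add: algebra_simps)+
end

lemma mat_scaleR_mult_left: "((a::real) *\<^sub>R (X::'n::finite cmat)) ** Y = a *\<^sub>R (X ** Y)"
  by (simp add: vec_eq_iff matrix_matrix_mult_def scaleR_sum_right)

lemma mat_scaleR_mult_right: "(X::'n::finite cmat) ** ((a::real) *\<^sub>R Y) = a *\<^sub>R (X ** Y)"
  by (simp add: vec_eq_iff matrix_matrix_mult_def scaleR_sum_right)

instantiation M :: (finite) real_algebra_1
begin
lift_definition times_M :: "'a M \<Rightarrow> 'a M \<Rightarrow> 'a M" is "(**)" .
lift_definition one_M :: "'a M" is "mat 1" .
instance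
proof
  fix a b c :: "'a M" and r :: real
  show "a * b * c = a * (b * c)" by transfer (simp add: matrix_mul_assoc)
  show "1 * a = a" by transfer simp
  show "a * 1 = a" by transfer simp
  show "(a + b) * c = a * c + b * c" by transfer (simp add: vec_eq_iff matrix_matrix_mult_def distrib_right sum.distrib)
  show "a * (b + c) = a * b + a * c" by transfer (simp add: matrix_add_ldistrib)
  show "(0::'a M) \<noteq> 1" by transfer (simp add: vec_eq_iff mat_def)
  show "r *\<^sub>R a * b = r *\<^sub>R (a * b)" by transfer (simp add: mat_scaleR_mult_left)
  show "a * r *\<^sub>R b = r *\<^sub>R (a * b)" by transfer (simp add: mat_scaleR_mult_right)
qed
end


lemma mat_scaleR_mvec: "((a::real) *\<^sub>R (X::'n::finite cmat)) *v v = a *\<^sub>R (X *v v)"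
  by (simp add: vec_eq_iff matrix_vector_mult_def scaleR_sum_right)

lemma mat_eq_zero_iff_mvec: "(X::'n::finite cmat) = 0 \<longleftrightarrow> (\<forall>v. X *v v = 0)"
  using matrix_eq[of X 0] by (simp add: matrix_vector_mult_def vec_eq_iff)

instantiation M :: (finite) real_normed_algebra_1
begin
lift_definition norm_M :: "'a M \<Rightarrow> real" is "\<lambda>X. onorm (\<lambda>v::complex^'a. X *v v)" .
definition dist_M :: "'a M \<Rightarrow> 'a M \<Rightarrow> real" where "dist_M x y = norm (x - y)"
definition sgn_M :: "'a M \<Rightarrow> 'a M" where "sgn_M x = x /\<^sub>R norm x"
definition uniformity_M :: "('a M \<times> 'a M) filter" where
  "uniformity_M = (INF e\<in>{0<..}. principal {(x, y). dist x y < e})"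
definition open_M :: "'a M set \<Rightarrow> bool" where
  "open_M U = (\<forall>x\<in>U. eventually (\<lambda>(x', y). x' = x \<longrightarrow> y \<in> U) uniformity)"
instance
proof
  fix a b :: "'a M" and r :: real
  show "dist a b = norm (a - b)" by (simp add: dist_M_def)
  show "sgn a = a /\<^sub>R norm a" by (simp add: sgn_M_def)
  show "(uniformity :: ('a M \<times> 'a M) filter) = (INF e\<in>{0<..}. principal {(x, y). dist x y < e})"
    by (simp add: uniformity_M_def)
  show "open U = (\<forall>x\<in>U. eventually (\<lambda>(x', y). x' = x \<longrightarrow> y \<in> U) uniformity)" for U :: "'a M set"
    by (simp add: open_M_def)
  show "(norm a = 0) = (a = 0)"
    by transfer (simp add: onorm_eq_0[OF mvec_linear] mat_eq_zero_iff_mvec[symmetric])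
  show "norm (a + b) \<le> norm a + norm b"
  proof transfer
    fix A B :: "'a cmat"
    show "onorm (\<lambda>v::complex^'a. (A + B) *v v) \<le> onorm (\<lambda>v::complex^'a. A *v v) + onorm (\<lambda>v::complex^'a. B *v v)"
      using onorm_triangle[OF mvec_linear[of A] mvec_linear[of B]]
      by (simp add: matrix_vector_mult_add_rdistrib)
  qed
  show "norm (r *\<^sub>R a) = \<bar>r\<bar> * norm a"
  proof transfer
    fix A :: "'a cmat" and r :: real
    show "onorm (\<lambda>v::complex^'a. (r *\<^sub>R A) *v v) = \<bar>r\<bar> * onorm (\<lambda>v::complex^'a. A *v v)"
      using onorm_scaleR[OF mvec_linear[of A], of r]
      by (simp add: mat_scaleR_mvec)
  qed
  show "norm (a * b) \<le> norm a * norm b"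
  proof transfer
    fix A B :: "'a cmat"
    have "onorm ((\<lambda>v::complex^'a. A *v v) \<circ> (\<lambda>v. B *v v)) \<le> onorm (\<lambda>v::complex^'a. A *v v) * onorm (\<lambda>v::complex^'a. B *v v)"
      by (rule onorm_compose) (rule mvec_linear)+
    then show "onorm (\<lambda>v::complex^'a. (A ** B) *v v) \<le> onorm (\<lambda>v::complex^'a. A *v v) * onorm (\<lambda>v::complex^'a. B *v v)"
      by (simp add: o_def matrix_vector_mul_assoc)
  qed
  show "norm (1::'a M) = 1"
    by transfer (simp add: onorm_id)
qed
end


lemma norm_axis1: "norm (axis j (1::complex) :: complex^'n::finite) = 1"
proof -
  have "(\<lambda>i. (norm (axis j (1::complex) $ i))\<^sup>2) = (\<lambda>i. if i = j then 1 else 0)"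
    by (auto simp: axis_def)
  then show ?thesis unfolding norm_vec_def L2_set_def by (simp only:) simp
qed

lemma norm_vec_l1: "norm (x::'a::real_normed_vector^'n::finite) \<le> sum (\<lambda>i. norm (x$i)) UNIV"
  by (simp add: norm_vec_def L2_set_le_sum)

lemma entry_le_normM: "norm (Rep_M (X::'n::finite M) $ i $ j) \<le> norm X"
proof -
  have "Rep_M X $ i $ j = (Rep_M X *v axis j 1) $ i"
    by (simp add: matrix_vector_mult_def axis_def if_distrib cong: if_cong)
  also have "norm \<dots> \<le> norm (Rep_M X *v axis j 1)" by (rule Finite_Cartesian_Product.norm_nth_le)
  also have "\<dots> \<le> onorm (\<lambda>v::complex^'n. Rep_M X *v v) * norm (axis j (1::complex) :: complex^'n)"
    by (rule onorm[OF mvec_linear])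
  also have "\<dots> = norm X" by (simp add: norm_axis1 norm_M.rep_eq)
  finally show ?thesis .
qed

lemma norm_Rep_le: "norm (Rep_M (X::'n::finite M)) \<le> of_nat (CARD('n) * CARD('n)) * norm X"
proof -
  have "norm (Rep_M X) \<le> (\<Sum>i\<in>UNIV. norm (Rep_M X $ i))" by (rule norm_vec_l1)
  also have "\<dots> \<le> (\<Sum>i\<in>(UNIV::'n set). \<Sum>j\<in>(UNIV::'n set). norm (Rep_M X $ i $ j))"
    by (intro sum_mono norm_vec_l1)
  also have "\<dots> \<le> (\<Sum>i\<in>(UNIV::'n set). \<Sum>j\<in>(UNIV::'n set). norm X)"
    by (intro sum_mono entry_le_normM)
  also have "\<dots> = of_nat (CARD('n) * CARD('n)) * norm X" by simp
  finally show ?thesis .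
qed

lemma mvec_bound: "norm ((A::'n::finite cmat) *v v) \<le> of_nat (CARD('n) * CARD('n)) * norm A * norm v"
proof -
  have "norm (A *v v) \<le> (\<Sum>i\<in>UNIV. norm ((A *v v) $ i))" by (rule norm_vec_l1)
  also have "\<dots> \<le> (\<Sum>i\<in>(UNIV::'n set). \<Sum>j\<in>(UNIV::'n set). norm A * norm v)"
  proof (intro sum_mono)
    fix i
    have "norm ((A *v v) $ i) = norm (\<Sum>j\<in>UNIV. A $ i $ j * v $ j)"
      by (simp add: matrix_vector_mult_def)
    also have "\<dots> \<le> (\<Sum>j\<in>UNIV. norm (A $ i $ j * v $ j))" by (rule norm_sum)
    also have "\<dots> \<le> (\<Sum>j\<in>(UNIV::'n set). norm A * norm v)"
    proof (intro sum_mono)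
      fix j
      have "norm (A $ i $ j) \<le> norm A"
        using Finite_Cartesian_Product.norm_nth_le[of "A $ i" j] Finite_Cartesian_Product.norm_nth_le[of A i] by linarith
      moreover have "norm (v $ j) \<le> norm v" by (rule Finite_Cartesian_Product.norm_nth_le)
      ultimately show "norm (A $ i $ j * v $ j) \<le> norm A * norm v"
        by (simp add: norm_mult mult_mono)
    qed
    finally show "norm ((A *v v) $ i) \<le> (\<Sum>j\<in>(UNIV::'n set). norm A * norm v)" .
  qed
  also have "\<dots> = of_nat (CARD('n) * CARD('n)) * norm A * norm v" by simp
  finally show ?thesis .
qed

lemma norm_M_le: "norm (X::'n::finite M) \<le> of_nat (CARD('n) * CARD('n)) * norm (Rep_M X)"
  unfolding norm_M.rep_eq
proof (rule onorm_bound)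
  show "0 \<le> of_nat (CARD('n) * CARD('n)) * norm (Rep_M X)" by simp
  show "norm (Rep_M X *v x) \<le> of_nat (CARD('n) * CARD('n)) * norm (Rep_M X) * norm x" for x :: "complex^'n"
    by (rule mvec_bound)
qed

lemma bounded_linear_Rep_M: "bounded_linear Rep_M"
proof
  show "Rep_M (x + y) = Rep_M x + Rep_M y" for x y :: "'a M" by transfer simp
  show "Rep_M (r *\<^sub>R x) = r *\<^sub>R Rep_M x" for r and x :: "'a M" by transfer simp
  show "\<exists>K. \<forall>x::'a M. norm (Rep_M x) \<le> norm x * K"
    using norm_Rep_le by (metis mult.commute)
qed

lemma bounded_linear_Abs_M: "bounded_linear (Abs_M :: 'n::finite cmat \<Rightarrow> 'n M)"
proof
  show "Abs_M (x + y) = (Abs_M x + Abs_M y :: 'n M)" for x y :: "'n cmat"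
    by (simp add: plus_M.abs_eq eq_onp_same_args)
  show "Abs_M (r *\<^sub>R x) = (r *\<^sub>R Abs_M x :: 'n M)" for r and x :: "'n cmat"
    by (simp add: scaleR_M.abs_eq eq_onp_same_args)
  show "\<exists>K. \<forall>x::'n cmat. norm (Abs_M x :: 'n M) \<le> norm x * K"
    using norm_M_le by (metis mult.commute Abs_M_inverse UNIV_I)
qed

instance M :: (finite) banach
proof
  fix X :: "nat \<Rightarrow> 'a M" assume "Cauchy X"
  then have "Cauchy (\<lambda>k. Rep_M (X k))"
    using bounded_linear.Cauchy[OF bounded_linear_Rep_M] by blast
  then obtain L where L: "(\<lambda>k. Rep_M (X k)) \<longlonglongrightarrow> L"
    using Cauchy_convergent_iff convergent_def by blast
  have "(\<lambda>k. Abs_M (Rep_M (X k)) :: 'a M) \<longlonglongrightarrow> Abs_M L"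
    by (rule bounded_linear.tendsto[OF bounded_linear_Abs_M L])
  then show "convergent X" by (auto simp: Rep_M_inverse convergent_def)
qed

lemma Rep_Abs_M[simp]: "Rep_M (Abs_M X) = X" by (simp add: Abs_M_inverse)

lemma Rep_M_power: "Rep_M (x ^ k) = mpow (Rep_M x) k"
  by (induction k) (simp_all add: one_M.rep_eq times_M.rep_eq)

lemma mexp_Rep: "mexp X = Rep_M (exp (Abs_M X))"
proof -
  have "Rep_M (exp (Abs_M X)) = (\<Sum>n. Rep_M ((Abs_M X)^n /\<^sub>R fact n))"
    unfolding exp_def by (rule bounded_linear.suminf[OF bounded_linear_Rep_M summable_exp_generic])
  also have "\<dots> = mexp X" unfolding mexp_def
    by (simp add: Rep_M_power scaleR_M.rep_eq divide_inverse)
  finally show ?thesis by simp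
qed

lemma mexp_Rep': "mexp (Rep_M x) = Rep_M (exp x)"
  by (simp add: mexp_Rep Rep_M_inverse)

lemma mexp_zero: "mexp (0::'n::finite cmat) = mat 1"
  by (simp add: mexp_Rep zero_M_def[symmetric] one_M.rep_eq)


lemma Rep_M_eqI: "Rep_M x = Rep_M y \<Longrightarrow> x = y" by (simp add: Rep_M_inject)

lemma Abs_M_mult: "Abs_M (X ** Y) = Abs_M X * Abs_M Y"
  by (rule Rep_M_eqI) (simp add: times_M.rep_eq)
lemma Abs_M_add: "Abs_M (X + Y) = Abs_M X + Abs_M Y"
  by (rule Rep_M_eqI) (simp add: plus_M.rep_eq)
lemma Abs_M_diff: "Abs_M (X - Y) = Abs_M X - Abs_M Y"
  by (rule Rep_M_eqI) (simp add: minus_M.rep_eq)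
lemma Abs_M_uminus: "Abs_M (- X) = - Abs_M X"
  by (rule Rep_M_eqI) (simp add: uminus_M.rep_eq)
lemma Abs_M_scaleR: "Abs_M (r *\<^sub>R X) = r *\<^sub>R Abs_M X"
  by (rule Rep_M_eqI) (simp add: scaleR_M.rep_eq)
lemma Abs_M_one: "Abs_M (mat 1) = 1"
  by (rule Rep_M_eqI) (simp add: one_M.rep_eq)

lemma mexp_add_comm:
  assumes "X ** Y = Y ** X"
  shows "mexp (X + Y) = mexp X ** mexp Y"
proof -
  have "Abs_M X * Abs_M Y = Abs_M Y * Abs_M X"
    using assms by (simp add: Abs_M_mult[symmetric])
  then show ?thesis
    by (simp add: mexp_Rep Abs_M_add exp_add_commuting times_M.rep_eq)
qed

lemma mexp_inv: "mexp X ** mexp (- X) = mat 1" "mexp (- X) ** mexp X = mat 1"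
  using exp_minus_inverse[of "Abs_M X"] exp_minus_inverse[of "- Abs_M X"]
  by (simp_all add: mexp_Rep Abs_M_uminus times_M.rep_eq one_M.rep_eq flip: times_M.rep_eq one_M.rep_eq)

lemma exp_conj_M:
  fixes a b x :: "'a::{banach,real_normed_algebra_1}"
  assumes ab: "a * b = 1" "b * a = 1"
  shows "exp (a * x * b) = a * exp x * b"
proof -
  have pw: "(a * x * b) ^ n = a * x ^ n * b" for n
  proof (induction n)
    case 0 then show ?case using ab by simp
  next
    case (Suc n)
    have "(a * x * b) ^ Suc n = a * x * b * (a * x ^ n * b)"
      by (simp add: Suc)
    also have "\<dots> = a * x * (b * a) * x ^ n * b"
      by (simp add: mult.assoc)
    also have "\<dots> = a * x ^ Suc n * b" using ab by (simp add: mult.assoc)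
    finally show ?case .
  qed
  have bl: "bounded_linear (\<lambda>y. a * y * b)"
    using bounded_linear_compose[OF bounded_linear_mult_left[of b] bounded_linear_mult_right[of a]]
    by (simp add: o_def)
  have "a * exp x * b = (\<Sum>n. a * (x ^ n /\<^sub>R fact n) * b)"
    unfolding exp_def by (rule bounded_linear.suminf[OF bl summable_exp_generic])
  also have "\<dots> = exp (a * x * b)"
    unfolding exp_def by (simp add: pw)
  finally show ?thesis by simp
qed

lemma mexp_conj:
  fixes m m' X :: "'n::finite cmat"
  assumes "m ** m' = mat 1" "m' ** m = mat 1"
  shows "mexp (m ** X ** m') = m ** mexp X ** m'"
proof -
  have "Abs_M m * Abs_M m' = 1" "Abs_M m' * Abs_M m = 1"
    using assms by (simp_all add: Abs_M_mult[symmetric] Abs_M_one)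
  from exp_conj_M[OF this, of "Abs_M X"] show ?thesis
    by (simp add: mexp_Rep Abs_M_mult times_M.rep_eq)
qed

lemma mexp_deriv0: "((\<lambda>t. mexp (t *\<^sub>R X)) has_vector_derivative X) (at 0)"
proof -
  have "((\<lambda>t. exp (t *\<^sub>R Abs_M X)) has_vector_derivative exp (0 *\<^sub>R Abs_M X) * Abs_M X) (at 0)"
    by (rule exp_scaleR_has_vector_derivative_right)
  then have "((\<lambda>t. Rep_M (exp (t *\<^sub>R Abs_M X))) has_vector_derivative Rep_M (Abs_M X)) (at 0)"
    using bounded_linear.has_vector_derivative[OF bounded_linear_Rep_M] by force
  then show ?thesis by (simp add: mexp_Rep Abs_M_scaleR)
qed

lemma mexp_inj:
  assumes "\<forall>t. mexp (t *\<^sub>R X) = mexp (t *\<^sub>R Y)"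
  shows "X = Y"
  using mexp_deriv0[of X] mexp_deriv0[of Y] assms vector_derivative_unique_at by force


lemma inv_Suc_at0: "filterlim (\<lambda>n. 1 / real (Suc n)) (at (0::real)) sequentially"
  unfolding filterlim_at using LIMSEQ_inverse_real_of_nat
  by (simp add: divide_inverse)

lemma deriv_seq:
  fixes g :: "real \<Rightarrow> 'a::real_normed_vector"
  assumes "(g has_vector_derivative D) (at 0)"
  shows "(\<lambda>n. real (Suc n) *\<^sub>R (g (1 / real (Suc n)) - g 0)) \<longlonglongrightarrow> D"
proof -
  define \<phi> where "\<phi> = (\<lambda>t. norm ((g t - g 0) - t *\<^sub>R D) / norm t)"
  have "(\<phi> \<longlongrightarrow> 0) (at 0)"
    using assms unfolding has_vector_derivative_def has_derivative_iff_norm \<phi>_def by simp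
  from filterlim_compose[OF this inv_Suc_at0]
  have h: "(\<lambda>n. norm ((g (1 / real (Suc n)) - g 0) - (1 / real (Suc n)) *\<^sub>R D) / norm (1 / real (Suc n))) \<longlonglongrightarrow> 0"
    unfolding \<phi>_def by simp
  have "(\<lambda>n. real (Suc n) *\<^sub>R (g (1 / real (Suc n)) - g 0) - D) \<longlonglongrightarrow> 0"
  proof (rule Lim_null_comparison[OF _ h], rule always_eventually, rule allI)
    fix n
    have "real (Suc n) *\<^sub>R (g (1 / real (Suc n)) - g 0) - D
        = real (Suc n) *\<^sub>R ((g (1 / real (Suc n)) - g 0) - (1 / real (Suc n)) *\<^sub>R D)"
      by (simp add: algebra_simps)
    then show "norm (real (Suc n) *\<^sub>R (g (1 / real (Suc n)) - g 0) - D)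
      \<le> norm ((g (1 / real (Suc n)) - g 0) - (1 / real (Suc n)) *\<^sub>R D) / norm (1 / real (Suc n))"
      by (simp add: divide_simps)
  qed
  then show ?thesis by (simp add: LIM_zero_iff)
qed

lemma pow_diff_bound:
  fixes S T :: "'a::real_normed_algebra_1"
  assumes "norm S \<le> K" "norm T \<le> K" "1 \<le> K"
  shows "norm (S^n - T^n) \<le> real n * K^n * norm (S - T)"
proof (induction n)
  case 0 then show ?case by simp
next
  case (Suc n)
  have K0: "0 \<le> K" using assms by simp
  have e: "S^Suc n - T^Suc n = S * (S^n - T^n) + (S - T) * T^n"
    by (simp add: algebra_simps)
  have "norm (S * (S^n - T^n)) \<le> K * (real n * K^n * norm (S - T))"
    using norm_mult_ineq[of S "S^n - T^n"] Suc assms(1) K0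
    by (meson mult_mono norm_ge_zero order_trans)
  moreover have "norm ((S - T) * T^n) \<le> norm (S - T) * K^n"
  proof -
    have "norm (T^n) \<le> K^n"
      using norm_power_ineq[of T n] power_mono[OF assms(2) norm_ge_zero, of n] by linarith
    then show ?thesis
      using norm_mult_ineq[of "S - T" "T^n"]
      by (meson mult_left_mono norm_ge_zero order_trans)
  qed
  moreover have "K^n \<le> K * K^n" using assms(3) K0 by (simp add: mult_le_cancel_right1)
  ultimately have "norm (S^Suc n - T^Suc n) \<le> K * (real n * K^n * norm (S - T)) + K * K^n * norm (S - T)"
    unfolding e using norm_triangle_ineq[of "S * (S^n - T^n)" "(S - T) * T^n"]
    by (smt (verit, ccfv_SIG) mult.commute mult_right_mono norm_ge_zero)
  then show ?case by (simp add: algebra_simps)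
qed


lemma exp_deriv0:
  fixes x :: "'a::{banach,real_normed_algebra_1}"
  shows "((\<lambda>t. exp (t *\<^sub>R x)) has_vector_derivative x) (at 0)"
  using exp_scaleR_has_vector_derivative_right[of x 0 UNIV] by simp

lemma exp_scaleR_nat:
  fixes z :: "'a::{banach,real_normed_algebra_1}"
  shows "exp (real n *\<^sub>R z) = exp z ^ n"
proof (induction n)
  case 0 then show ?case by simp
next
  case (Suc n)
  have "exp (real (Suc n) *\<^sub>R z) = exp (z + real n *\<^sub>R z)" by (simp add: algebra_simps)
  also have "\<dots> = exp z * exp (real n *\<^sub>R z)"
    by (rule exp_add_commuting) (simp add: mult_scaleR_left mult_scaleR_right)
  finally show ?case by (simp add: Suc)
qed

lemma exp_pow_Suc:
  fixes z :: "'a::{banach,real_normed_algebra_1}"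
  shows "exp ((1 / real (Suc n)) *\<^sub>R z) ^ Suc n = exp z"
  using exp_scaleR_nat[of "Suc n" "(1 / real (Suc n)) *\<^sub>R z"] by simp

lemma trotter_gen:
  fixes x y :: "'a::{banach,real_normed_algebra_1}"
  shows "(\<lambda>n. (exp ((1 / real (Suc n)) *\<^sub>R x) * exp ((1 / real (Suc n)) *\<^sub>R y)) ^ Suc n) \<longlonglongrightarrow> exp (x + y)"
proof -
  define f where "f = (\<lambda>t::real. exp (t *\<^sub>R x) * exp (t *\<^sub>R y) - exp (t *\<^sub>R (x + y)))"
  have "(f has_vector_derivative (exp (0 *\<^sub>R x) * y + x * exp (0 *\<^sub>R y) - (x + y))) (at 0)"
    unfolding f_def
    by (intro has_vector_derivative_diff has_vector_derivative_mult exp_deriv0)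
  then have fd: "(f has_vector_derivative 0) (at 0)" by simp
  have f0: "f 0 = 0" by (simp add: f_def)
  from deriv_seq[OF fd] f0
  have a: "(\<lambda>n. real (Suc n) *\<^sub>R f (1 / real (Suc n))) \<longlonglongrightarrow> 0" by simp
  define c where "c = norm x + norm y"
  have "(\<lambda>n. (exp ((1 / real (Suc n)) *\<^sub>R x) * exp ((1 / real (Suc n)) *\<^sub>R y)) ^ Suc n - exp (x + y)) \<longlonglongrightarrow> 0"
  proof (rule Lim_null_comparison[OF always_eventually])
    show "(\<lambda>n. exp c * norm (real (Suc n) *\<^sub>R f (1 / real (Suc n)))) \<longlonglongrightarrow> 0"
      using tendsto_mult_right_zero[OF tendsto_norm_zero[OF a]] by simp
    show "\<forall>n. norm ((exp ((1 / real (Suc n)) *\<^sub>R x) * exp ((1 / real (Suc n)) *\<^sub>R y)) ^ Suc n - exp (x + y))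
          \<le> exp c * norm (real (Suc n) *\<^sub>R f (1 / real (Suc n)))"
    proof
      fix n
      define t where "t = 1 / real (Suc n)"
      have t0: "0 < t" by (simp add: t_def)
      define S where "S = exp (t *\<^sub>R x) * exp (t *\<^sub>R y)"
      define T where "T = exp (t *\<^sub>R (x + y))"
      define K where "K = exp (t * c)"
      have c0: "0 \<le> c" by (simp add: c_def)
      have K1: "1 \<le> K" unfolding K_def using t0 c0 by simp
      have nS: "norm S \<le> K"
      proof -
        have "norm S \<le> norm (exp (t *\<^sub>R x)) * norm (exp (t *\<^sub>R y))"
          unfolding S_def by (rule norm_mult_ineq)
        also have "\<dots> \<le> exp (norm (t *\<^sub>R x)) * exp (norm (t *\<^sub>R y))"
          by (intro mult_mono norm_exp) simp_all
        also have "\<dots> = K" using t0 by (simp add: K_def c_def exp_add[symmetric] algebra_simps)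
        finally show ?thesis .
      qed
      have nT: "norm T \<le> K"
      proof -
        have "norm T \<le> exp (norm (t *\<^sub>R (x + y)))" unfolding T_def by (rule norm_exp)
        also have "\<dots> \<le> K" unfolding K_def c_def using t0
          by (simp add: norm_triangle_ineq mult_left_mono)
        finally show ?thesis .
      qed
      have KN: "K ^ Suc n = exp c"
      proof -
        have "K ^ Suc n = exp (real (Suc n) * (t * c))" unfolding K_def by (rule exp_of_nat_mult[symmetric])
        then show ?thesis by (simp add: t_def)
      qed
      have TN: "T ^ Suc n = exp (x + y)" unfolding T_def t_def by (rule exp_pow_Suc)
      have "norm (S ^ Suc n - T ^ Suc n) \<le> real (Suc n) * K ^ Suc n * norm (S - T)"
        by (rule pow_diff_bound[OF nS nT K1])
      also have "\<dots> = exp c * norm (real (Suc n) *\<^sub>R f t)"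
        unfolding KN by (simp add: f_def S_def T_def)
      finally show "norm ((exp ((1 / real (Suc n)) *\<^sub>R x) * exp ((1 / real (Suc n)) *\<^sub>R y)) ^ Suc n - exp (x + y))
          \<le> exp c * norm (real (Suc n) *\<^sub>R f (1 / real (Suc n)))"
        unfolding TN by (simp only: S_def t_def)
    qed
  qed
  then show ?thesis by (simp add: LIM_zero_iff)
qed

lemma comm_lim_gen:
  fixes x y :: "'a::{banach,real_normed_algebra_1}"
  shows "(\<lambda>n. real (Suc n) *\<^sub>R (exp ((1 / real (Suc n)) *\<^sub>R x) * y * exp ((1 / real (Suc n)) *\<^sub>R (- x)) - y))
     \<longlonglongrightarrow> x * y - y * x"
proof -
  define g where "g = (\<lambda>t::real. exp (t *\<^sub>R x) * y * exp (t *\<^sub>R (- x)))"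
  have "(g has_vector_derivative (exp (0 *\<^sub>R x) * y * (- x) + x * y * exp (0 *\<^sub>R (- x)))) (at 0)"
    unfolding g_def
    by (intro has_vector_derivative_mult has_vector_derivative_mult_left exp_deriv0)
  then have "(g has_vector_derivative (x * y - y * x)) (at 0)" by simp
  from deriv_seq[OF this] show ?thesis by (simp add: g_def)
qed

lemma trotter_mat:
  "(\<lambda>n. mpow (mexp ((1 / real (Suc n)) *\<^sub>R X) ** mexp ((1 / real (Suc n)) *\<^sub>R Y)) (Suc n))
     \<longlonglongrightarrow> mexp (X + Y)"
proof -
  from bounded_linear.tendsto[OF bounded_linear_Rep_M trotter_gen[of "Abs_M X" "Abs_M Y"]]
  show ?thesis
    by (simp add: Rep_M_power times_M.rep_eq mexp_Rep Abs_M_add Abs_M_scaleR)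
qed

lemma comm_lim_mat:
  "(\<lambda>n. real (Suc n) *\<^sub>R (mexp ((1 / real (Suc n)) *\<^sub>R X) ** Y ** mexp ((1 / real (Suc n)) *\<^sub>R (- X)) - Y))
     \<longlonglongrightarrow> comm X Y"
proof -
  from bounded_linear.tendsto[OF bounded_linear_Rep_M comm_lim_gen[of "Abs_M X" "Abs_M Y"]]
  show ?thesis
    by (simp add: times_M.rep_eq minus_M.rep_eq scaleR_M.rep_eq mexp_Rep Abs_M_scaleR Abs_M_uminus comm_def)
qed

lemma inv_unique_mat:
  fixes A B :: "'n::finite cmat"
  assumes "A ** B = mat 1" "B ** A = mat 1"
  shows "matrix_inv A = B"
proof -
  have ex: "\<exists>A'. A ** A' = mat 1 \<and> A' ** A = mat 1" using assms by blast
  define A' where "A' = matrix_inv A"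
  have "A ** A' = mat 1 \<and> A' ** A = mat 1"
    unfolding A'_def matrix_inv_def by (rule someI_ex[OF ex])
  then have "A' = A' ** (A ** B)" using assms by simp
  also have "\<dots> = B" by (simp add: matrix_mul_assoc \<open>A ** A' = mat 1 \<and> A' ** A = mat 1\<close>)
  finally show ?thesis by (simp add: A'_def)
qed

lemma matrix_inv_props:
  fixes A :: "'n::finite cmat"
  assumes "invertible A"
  shows "A ** matrix_inv A = mat 1" "matrix_inv A ** A = mat 1"
proof -
  have ex: "\<exists>A'. A ** A' = mat 1 \<and> A' ** A = mat 1" using assms by (simp add: invertible_def)
  have "A ** matrix_inv A = mat 1 \<and> matrix_inv A ** A = mat 1"
    unfolding matrix_inv_def by (rule someI_ex[OF ex])
  then show "A ** matrix_inv A = mat 1" "matrix_inv A ** A = mat 1" by auto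
qed

lemma mpow_in:
  assumes "closed_matrix_group H" "P \<in> H"
  shows "mpow P k \<in> H"
  using assms by (induction k) (auto simp: closed_matrix_group_def)

lemma lie_alg_scale:
  assumes "X \<in> lie_alg H"
  shows "c *\<^sub>R X \<in> lie_alg H"
  using assms by (simp add: lie_alg_def)

lemma lie_alg_zero:
  assumes "closed_matrix_group H"
  shows "0 \<in> lie_alg H"
  using assms by (simp add: lie_alg_def mexp_zero closed_matrix_group_def)

lemma lie_alg_add:
  assumes H: "closed_matrix_group H" and X: "X \<in> lie_alg H" and Y: "Y \<in> lie_alg H"
  shows "X + Y \<in> lie_alg H"
  unfolding lie_alg_def
proof (intro CollectI allI)
  fix t :: real
  have cl: "closed H" using H by (simp add: closed_matrix_group_def)
  have "mexp (t *\<^sub>R X + t *\<^sub>R Y) \<in> H"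
  proof (rule closed_sequentially[OF cl _ trotter_mat])
    fix n
    have "mexp ((1 / real (Suc n)) *\<^sub>R t *\<^sub>R X) \<in> H" "mexp ((1 / real (Suc n)) *\<^sub>R t *\<^sub>R Y) \<in> H"
      using X Y by (simp_all add: lie_alg_def)
    then have "mexp ((1 / real (Suc n)) *\<^sub>R t *\<^sub>R X) ** mexp ((1 / real (Suc n)) *\<^sub>R t *\<^sub>R Y) \<in> H"
      using H by (simp add: closed_matrix_group_def)
    then show "mpow (mexp ((1 / real (Suc n)) *\<^sub>R t *\<^sub>R X) ** mexp ((1 / real (Suc n)) *\<^sub>R t *\<^sub>R Y)) (Suc n) \<in> H"
      by (rule mpow_in[OF H])
  qed
  then show "mexp (t *\<^sub>R (X + Y)) \<in> H" by (simp add: scaleR_right_distrib)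
qed

lemma lie_alg_subspace:
  assumes "closed_matrix_group H"
  shows "subspace (lie_alg H)"
  unfolding subspace_def
  using assms lie_alg_zero lie_alg_add lie_alg_scale by blast

lemma lie_alg_conj:
  assumes H: "closed_matrix_group H" and g: "g \<in> H" "g' \<in> H" "g ** g' = mat 1" "g' ** g = mat 1"
    and X: "X \<in> lie_alg H"
  shows "g ** X ** g' \<in> lie_alg H"
  unfolding lie_alg_def
proof (intro CollectI allI)
  fix t :: real
  have "t *\<^sub>R (g ** X ** g') = g ** (t *\<^sub>R X) ** g'"
    by (simp add: mat_scaleR_mult_left mat_scaleR_mult_right)
  then have "mexp (t *\<^sub>R (g ** X ** g')) = g ** mexp (t *\<^sub>R X) ** g'"
    using mexp_conj[OF g(3,4)] by simp
  moreover have "mexp (t *\<^sub>R X) \<in> H" using X by (simp add: lie_alg_def)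
  ultimately show "mexp (t *\<^sub>R (g ** X ** g')) \<in> H"
    using H g by (simp add: closed_matrix_group_def)
qed

lemma lie_alg_comm:
  assumes H: "closed_matrix_group H" and X: "X \<in> lie_alg H" and Y: "Y \<in> lie_alg H"
  shows "comm X Y \<in> lie_alg H"
proof (rule closed_sequentially[OF closed_subspace[OF lie_alg_subspace[OF H]] _ comm_lim_mat])
  fix n
  let ?s = "1 / real (Suc n)"
  have g: "mexp (?s *\<^sub>R X) \<in> H" "mexp (?s *\<^sub>R (- X)) \<in> H"
  proof -
    have e: "?s *\<^sub>R (- X) = (- ?s) *\<^sub>R X" by simp
    show "mexp (?s *\<^sub>R X) \<in> H" "mexp (?s *\<^sub>R (- X)) \<in> H"
      using X by (simp_all only: e lie_alg_def mem_Collect_eq)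
  qed
  have i: "mexp (?s *\<^sub>R X) ** mexp (?s *\<^sub>R (- X)) = mat 1" "mexp (?s *\<^sub>R (- X)) ** mexp (?s *\<^sub>R X) = mat 1"
    using mexp_inv[of "?s *\<^sub>R X"] by simp_all
  have "mexp (?s *\<^sub>R X) ** Y ** mexp (?s *\<^sub>R (- X)) \<in> lie_alg H"
    by (rule lie_alg_conj[OF H g i Y])
  then show "real (Suc n) *\<^sub>R (mexp (?s *\<^sub>R X) ** Y ** mexp (?s *\<^sub>R (- X)) - Y) \<in> lie_alg H"
    using lie_alg_subspace[OF H] Y by (simp add: subspace_diff subspace_scale)
qed

lemma hom_one:
  assumes H: "closed_matrix_group H" and f: "group_hom_on H f"
  shows "f (mat 1) = mat 1"
proof -
  have I: "mat 1 \<in> H" using H by (simp add: closed_matrix_group_def)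
  then have fI: "f (mat 1) \<in> H" using f by (auto simp: group_hom_on_def)
  then have inv: "invertible (f (mat 1))" using H by (auto simp: closed_matrix_group_def)
  have "f (mat 1) = f (mat 1) ** f (mat 1)"
    using f I by (metis group_hom_on_def matrix_mul_lid)
  then have "matrix_inv (f (mat 1)) ** f (mat 1) = matrix_inv (f (mat 1)) ** (f (mat 1) ** f (mat 1))"
    by simp
  then show ?thesis
    by (simp add: matrix_mul_assoc matrix_inv_props[OF inv])
qed

lemma hom_inv:
  assumes H: "closed_matrix_group H" and f: "group_hom_on H f" and a: "a \<in> H"
  shows "f (matrix_inv a) = matrix_inv (f a)"
proof -
  have ai: "matrix_inv a \<in> H" "invertible a" using H a by (auto simp: closed_matrix_group_def)
  have "f a ** f (matrix_inv a) = f (a ** matrix_inv a)"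
    using f a ai by (simp add: group_hom_on_def)
  also have "\<dots> = mat 1" using hom_one[OF H f] by (simp add: matrix_inv_props[OF ai(2)])
  finally have 1: "f a ** f (matrix_inv a) = mat 1" .
  have "f (matrix_inv a) ** f a = f (matrix_inv a ** a)"
    using f a ai by (simp add: group_hom_on_def)
  also have "\<dots> = mat 1" using hom_one[OF H f] by (simp add: matrix_inv_props[OF ai(2)])
  finally have 2: "f (matrix_inv a) ** f a = mat 1" .
  show ?thesis using inv_unique_mat[OF 1 2] by simp
qed

lemma fixed_group:
  assumes H: "closed_matrix_group H" and f: "group_hom_on H f"
  shows "closed_matrix_group (fixed_points H f)"
proof -
  have "closed {x \<in> H. f x - x = 0}"
    using f H by (intro continuous_closed_preimage_constant continuous_intros)
       (auto simp: group_hom_on_def closed_matrix_group_def)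
  then have cl: "closed (fixed_points H f)" by (simp add: fixed_points_def)
  show ?thesis
    unfolding closed_matrix_group_def
  proof (intro conjI ballI cl)
    show "fixed_points H f \<subseteq> {A. invertible A}"
      using H by (auto simp: fixed_points_def closed_matrix_group_def)
    show "mat 1 \<in> fixed_points H f"
      using H hom_one[OF H f] by (auto simp: fixed_points_def closed_matrix_group_def)
    show "a ** b \<in> fixed_points H f" if "a \<in> fixed_points H f" "b \<in> fixed_points H f" for a b
      using that H f by (auto simp: fixed_points_def closed_matrix_group_def group_hom_on_def)
    show "matrix_inv a \<in> fixed_points H f" if "a \<in> fixed_points H f" for a
      using that H hom_inv[OF H f] by (auto simp: fixed_points_def closed_matrix_group_def)
  qed
qed

lemma Abs_M_comm: "Abs_M (comm X Y) = Abs_M X * Abs_M Y - Abs_M Y * Abs_M X"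
  by (simp add: comm_def Abs_M_diff Abs_M_mult)

lemma Abs_M_eq_iff: "Abs_M X = Abs_M Y \<longleftrightarrow> X = Y"
  by (simp add: Abs_M_inject)

lemma comm_add_left: "comm (X + Y) Z = comm X Z + comm Y Z"
  by (rule Abs_M_eq_iff[THEN iffD1]) (simp add: Abs_M_comm Abs_M_add algebra_simps)
lemma comm_add_right: "comm X (Y + Z) = comm X Y + comm X Z"
  by (rule Abs_M_eq_iff[THEN iffD1]) (simp add: Abs_M_comm Abs_M_add algebra_simps)
lemma comm_diff_left: "comm (X - Y) Z = comm X Z - comm Y Z"
  by (rule Abs_M_eq_iff[THEN iffD1]) (simp add: Abs_M_comm Abs_M_diff algebra_simps)
lemma comm_diff_right: "comm X (Y - Z) = comm X Y - comm X Z"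
  by (rule Abs_M_eq_iff[THEN iffD1]) (simp add: Abs_M_comm Abs_M_diff algebra_simps)
lemma comm_scale_left: "comm (r *\<^sub>R X) Y = r *\<^sub>R comm X Y"
  by (rule Abs_M_eq_iff[THEN iffD1]) (simp add: Abs_M_comm Abs_M_scaleR algebra_simps)
lemma comm_scale_right: "comm X (r *\<^sub>R Y) = r *\<^sub>R comm X Y"
  by (rule Abs_M_eq_iff[THEN iffD1]) (simp add: Abs_M_comm Abs_M_scaleR algebra_simps)
lemma comm_neg_left: "comm (- X) Y = - comm X Y"
  by (rule Abs_M_eq_iff[THEN iffD1]) (simp add: Abs_M_comm Abs_M_uminus algebra_simps)
lemma comm_neg_right: "comm X (- Y) = - comm X Y"
  by (rule Abs_M_eq_iff[THEN iffD1]) (simp add: Abs_M_comm Abs_M_uminus algebra_simps)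
lemma comm_zero_left[simp]: "comm 0 Y = 0"
  by (simp add: comm_def)
lemma comm_zero_right[simp]: "comm X 0 = 0"
  by (simp add: comm_def)
lemma comm_anti: "comm X Y = - comm Y X"
  by (simp add: comm_def)
lemma comm_self[simp]: "comm X X = 0"
  by (simp add: comm_def)
lemma jacobi_ad: "comm (comm Z X) W = comm Z (comm X W) - comm X (comm Z W)"
  by (rule Abs_M_eq_iff[THEN iffD1]) (simp add: Abs_M_comm Abs_M_diff algebra_simps)

lemma linear_comm: "linear (comm X)"
  by (rule linearI) (simp_all add: comm_add_right comm_scale_right)

locale lc =
  fixes g0 :: "'n::finite cmat set" and \<theta> :: "'n cmat \<Rightarrow> 'n cmat"
  assumes sub: "subspace g0"
    and lie: "\<And>X Y. X \<in> g0 \<Longrightarrow> Y \<in> g0 \<Longrightarrow> comm X Y \<in> g0"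
    and cart: "cartan_involution_alg g0 \<theta>"
begin

lemma cart4: "(\<forall>X\<in>g0. \<theta> X \<in> g0 \<and> \<theta> (\<theta> X) = X)
   \<and> (\<forall>X\<in>g0. \<forall>Y\<in>g0. \<theta> (X + Y) = \<theta> X + \<theta> Y \<and> \<theta> (comm X Y) = comm (\<theta> X) (\<theta> Y))
   \<and> (\<forall>X\<in>g0. \<forall>c::real. \<theta> (c *\<^sub>R X) = c *\<^sub>R \<theta> X)
   \<and> (\<forall>X\<in>g0. X \<noteq> 0 \<longrightarrow> - killing g0 X (\<theta> X) > 0)"
  using cart unfolding cartan_involution_alg_def .

lemma th_in: "X \<in> g0 \<Longrightarrow> \<theta> X \<in> g0" using cart4 by blast
lemma th_inv: "X \<in> g0 \<Longrightarrow> \<theta> (\<theta> X) = X" using cart4 by blast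
lemma th_add: "X \<in> g0 \<Longrightarrow> Y \<in> g0 \<Longrightarrow> \<theta> (X + Y) = \<theta> X + \<theta> Y" using cart4 by blast
lemma th_comm: "X \<in> g0 \<Longrightarrow> Y \<in> g0 \<Longrightarrow> \<theta> (comm X Y) = comm (\<theta> X) (\<theta> Y)" using cart4 by blast
lemma th_scale: "X \<in> g0 \<Longrightarrow> \<theta> (r *\<^sub>R X) = r *\<^sub>R \<theta> X" using cart4 by blast
lemma th_pos: "X \<in> g0 \<Longrightarrow> X \<noteq> 0 \<Longrightarrow> - killing g0 X (\<theta> X) > 0" using cart4 by blast

lemma g0_add: "X \<in> g0 \<Longrightarrow> Y \<in> g0 \<Longrightarrow> X + Y \<in> g0" using sub by (rule subspace_add)
lemma g0_diff: "X \<in> g0 \<Longrightarrow> Y \<in> g0 \<Longrightarrow> X - Y \<in> g0" using sub by (rule subspace_diff)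
lemma g0_scale: "X \<in> g0 \<Longrightarrow> r *\<^sub>R X \<in> g0" using sub by (rule subspace_scale)
lemma g0_neg: "X \<in> g0 \<Longrightarrow> - X \<in> g0" using sub by (rule subspace_neg)
lemma g0_zero: "0 \<in> g0" using sub by (rule subspace_0)
lemma g0_sum: "(\<And>i. i \<in> I \<Longrightarrow> f i \<in> g0) \<Longrightarrow> sum f I \<in> g0" using sub by (rule subspace_sum)

lemma th_neg: "X \<in> g0 \<Longrightarrow> \<theta> (- X) = - \<theta> X"
  using th_scale[of X "-1"] by simp
lemma th_diff: "X \<in> g0 \<Longrightarrow> Y \<in> g0 \<Longrightarrow> \<theta> (X - Y) = \<theta> X - \<theta> Y"
  using th_add[of X "- Y"] th_neg[of Y] g0_neg[of Y] by simp
lemma th_zero: "\<theta> 0 = 0"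
  using th_scale[OF g0_zero, of 0] by simp

definition Bs where "Bs = (SOME B. B \<subseteq> g0 \<and> independent B \<and> g0 \<subseteq> span B)"

lemma Bs_ex: "Bs \<subseteq> g0 \<and> independent Bs \<and> g0 \<subseteq> span Bs"
proof -
  obtain B where "B \<subseteq> g0" "independent B" "g0 \<subseteq> span B" "card B = dim g0" by (rule basis_exists)
  then have "\<exists>B. B \<subseteq> g0 \<and> independent B \<and> g0 \<subseteq> span B" by (intro exI conjI)
  then show ?thesis unfolding Bs_def by (rule someI_ex)
qed

lemma Bs_sub: "Bs \<subseteq> g0" using conjunct1[OF Bs_ex] .
lemma Bs_ind: "independent Bs" using conjunct1[OF conjunct2[OF Bs_ex]] .
lemma Bs_span: "span Bs = g0"
proof -
  have "g0 \<subseteq> span Bs" using conjunct2[OF conjunct2[OF Bs_ex]] .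
  then show ?thesis by (rule span_subspace[OF Bs_sub _ sub])
qed
lemma Bs_fin: "finite Bs" using finiteI_independent[OF Bs_ind] .

lemma in_spanBs: "v \<in> g0 \<Longrightarrow> v \<in> span Bs" using Bs_span by simp

definition tr where "tr F = (\<Sum>b\<in>Bs. representation Bs (F b) b)"

lemma killing_eq: "killing g0 X Y = tr (\<lambda>b. comm X (comm Y b))"
  by (simp add: killing_def Let_def tr_def Bs_def)

definition lin where "lin F \<longleftrightarrow> (\<forall>x\<in>g0. F x \<in> g0) \<and> (\<forall>x\<in>g0. \<forall>y\<in>g0. F (x + y) = F x + F y)
   \<and> (\<forall>x\<in>g0. \<forall>r. F (r *\<^sub>R x) = r *\<^sub>R F x)"

lemma lin_in: "lin F \<Longrightarrow> x \<in> g0 \<Longrightarrow> F x \<in> g0" by (simp add: lin_def)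
lemma lin_add: "lin F \<Longrightarrow> x \<in> g0 \<Longrightarrow> y \<in> g0 \<Longrightarrow> F (x + y) = F x + F y" by (simp add: lin_def)
lemma lin_scale: "lin F \<Longrightarrow> x \<in> g0 \<Longrightarrow> F (r *\<^sub>R x) = r *\<^sub>R F x" by (simp add: lin_def)
lemma lin_zero: "lin F \<Longrightarrow> F 0 = 0" using lin_scale[OF _ g0_zero, of F 0] by simp

lemma lin_sum:
  assumes F: "lin F" and fin: "finite I" and v: "\<And>i. i \<in> I \<Longrightarrow> v i \<in> g0"
  shows "F (\<Sum>i\<in>I. v i) = (\<Sum>i\<in>I. F (v i))"
  using fin v
proof (induction I rule: finite_induct)
  case empty then show ?case by (simp add: lin_zero[OF F])
next
  case (insert x I)
  then show ?case by (simp add: lin_add[OF F] g0_sum)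
qed

lemma lin_expand: assumes "lin F" "v \<in> g0"
  shows "F v = (\<Sum>c\<in>Bs. representation Bs v c *\<^sub>R F c)"
proof -
  have "v = (\<Sum>c\<in>Bs. representation Bs v c *\<^sub>R c)"
    using sum_representation_eq[OF Bs_ind in_spanBs[OF assms(2)] Bs_fin] by simp
  then have "F v = F (\<Sum>c\<in>Bs. representation Bs v c *\<^sub>R c)" by simp
  also have "\<dots> = (\<Sum>c\<in>Bs. F (representation Bs v c *\<^sub>R c))"
  proof (rule lin_sum[OF assms(1) Bs_fin])
    fix c assume "c \<in> Bs"
    then show "representation Bs v c *\<^sub>R c \<in> g0" using Bs_sub by (intro g0_scale) blast
  qed
  also have "\<dots> = (\<Sum>c\<in>Bs. representation Bs v c *\<^sub>R F c)"
    using assms Bs_sub by (intro sum.cong refl) (auto simp: lin_scale)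
  finally show ?thesis .
qed

lemma rep_expand: assumes "lin F" "v \<in> g0"
  shows "representation Bs (F v) b = (\<Sum>c\<in>Bs. representation Bs v c * representation Bs (F c) b)"
proof -
  have Fc: "c \<in> Bs \<Longrightarrow> F c \<in> span Bs" for c
    using assms Bs_sub lin_in[OF assms(1), of c] in_spanBs by blast
  have "representation Bs (F v) b = representation Bs (\<Sum>c\<in>Bs. representation Bs v c *\<^sub>R F c) b"
    using lin_expand[OF assms] by simp
  also have "\<dots> = (\<Sum>c\<in>Bs. representation Bs (representation Bs v c *\<^sub>R F c) b)"
    using representation_sum[OF Bs_ind, of Bs "\<lambda>c. representation Bs v c *\<^sub>R F c"] Fc
    by (simp add: span_scale)
  also have "\<dots> = (\<Sum>c\<in>Bs. representation Bs v c * representation Bs (F c) b)"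
    using Fc by (intro sum.cong refl) (simp add: representation_scale[OF Bs_ind])
  finally show ?thesis .
qed

lemma tr_swap: assumes F: "lin F" and G: "lin G"
  shows "tr (\<lambda>b. F (G b)) = tr (\<lambda>b. G (F b))"
proof -
  have "tr (\<lambda>b. F (G b)) = (\<Sum>b\<in>Bs. \<Sum>c\<in>Bs. representation Bs (G b) c * representation Bs (F c) b)"
    unfolding tr_def
  proof (intro sum.cong refl rep_expand[OF F])
    fix b assume "b \<in> Bs" then show "G b \<in> g0" using Bs_sub lin_in[OF G, of b] by blast
  qed
  also have "\<dots> = (\<Sum>c\<in>Bs. \<Sum>b\<in>Bs. representation Bs (G b) c * representation Bs (F c) b)"
    by (rule sum.swap)
  also have "\<dots> = (\<Sum>c\<in>Bs. \<Sum>b\<in>Bs. representation Bs (F c) b * representation Bs (G b) c)"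
    by (simp add: mult.commute)
  also have "\<dots> = tr (\<lambda>b. G (F b))"
    unfolding tr_def
  proof (intro sum.cong refl rep_expand[OF G, symmetric])
    fix b assume "b \<in> Bs" then show "F b \<in> g0" using Bs_sub lin_in[OF F, of b] by blast
  qed
  finally show ?thesis .
qed

lemma tr_cong: "(\<And>b. b \<in> g0 \<Longrightarrow> F b = G b) \<Longrightarrow> tr F = tr G"
  unfolding tr_def using Bs_sub by (intro sum.cong refl) auto

lemma tr_diff: "(\<And>b. b \<in> g0 \<Longrightarrow> F b \<in> g0) \<Longrightarrow> (\<And>b. b \<in> g0 \<Longrightarrow> G b \<in> g0) \<Longrightarrow>
    tr (\<lambda>b. F b - G b) = tr F - tr G"
  unfolding tr_def using Bs_sub
  by (simp add: representation_diff[OF Bs_ind] in_spanBs subset_eq sum_subtractf)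

lemma tr_add: "(\<And>b. b \<in> g0 \<Longrightarrow> F b \<in> g0) \<Longrightarrow> (\<And>b. b \<in> g0 \<Longrightarrow> G b \<in> g0) \<Longrightarrow>
    tr (\<lambda>b. F b + G b) = tr F + tr G"
  unfolding tr_def using Bs_sub
  by (simp add: representation_add[OF Bs_ind] in_spanBs subset_eq sum.distrib)

lemma tr_scale: "(\<And>b. b \<in> g0 \<Longrightarrow> F b \<in> g0) \<Longrightarrow> tr (\<lambda>b. r *\<^sub>R F b) = r * tr F"
  unfolding tr_def using Bs_sub
  by (simp add: representation_scale[OF Bs_ind] in_spanBs subset_eq sum_distrib_left)

lemma lin_comm: "X \<in> g0 \<Longrightarrow> lin (comm X)"
  by (simp add: lin_def lie comm_add_right comm_scale_right)

lemma lin_comp: "lin F \<Longrightarrow> lin G \<Longrightarrow> lin (\<lambda>b. F (G b))"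
  by (simp add: lin_def)

lemma lin_th: "lin \<theta>"
  by (simp add: lin_def th_in th_add th_scale)

lemma ad_in: "X \<in> g0 \<Longrightarrow> b \<in> g0 \<Longrightarrow> comm X b \<in> g0" by (rule lie)

lemma kill_sym: "X \<in> g0 \<Longrightarrow> Y \<in> g0 \<Longrightarrow> killing g0 X Y = killing g0 Y X"
  unfolding killing_eq by (rule tr_swap[OF lin_comm lin_comm])

lemma kill_add_left: "X \<in> g0 \<Longrightarrow> X' \<in> g0 \<Longrightarrow> Y \<in> g0 \<Longrightarrow>
    killing g0 (X + X') Y = killing g0 X Y + killing g0 X' Y"
  unfolding killing_eq comm_add_left by (rule tr_add) (simp_all add: ad_in)

lemma kill_scale_left: "X \<in> g0 \<Longrightarrow> Y \<in> g0 \<Longrightarrow> killing g0 (r *\<^sub>R X) Y = r * killing g0 X Y"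
  unfolding killing_eq comm_scale_left by (rule tr_scale) (simp_all add: ad_in)

lemma kill_add_right: "X \<in> g0 \<Longrightarrow> Y \<in> g0 \<Longrightarrow> Y' \<in> g0 \<Longrightarrow>
    killing g0 X (Y + Y') = killing g0 X Y + killing g0 X Y'"
  using kill_add_left[of Y Y' X] kill_sym g0_add by simp

lemma kill_scale_right: "X \<in> g0 \<Longrightarrow> Y \<in> g0 \<Longrightarrow> killing g0 X (r *\<^sub>R Y) = r * killing g0 X Y"
  using kill_scale_left[of Y X r] kill_sym g0_scale by simp

lemma kill_neg_right: "X \<in> g0 \<Longrightarrow> Y \<in> g0 \<Longrightarrow> killing g0 X (- Y) = - killing g0 X Y"
  using kill_scale_right[of X Y "-1"] by simp

lemma kill_inv: assumes X: "X \<in> g0" and Y: "Y \<in> g0" and Z: "Z \<in> g0"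
  shows "killing g0 (comm Z X) Y = - killing g0 X (comm Z Y)"
proof -
  have "killing g0 (comm Z X) Y = tr (\<lambda>b. comm Z (comm X (comm Y b)) - comm X (comm Z (comm Y b)))"
    unfolding killing_eq jacobi_ad ..
  also have "\<dots> = tr (\<lambda>b. comm Z (comm X (comm Y b))) - tr (\<lambda>b. comm X (comm Z (comm Y b)))"
    by (rule tr_diff) (simp_all add: ad_in X Y Z)
  finally have 1: "killing g0 (comm Z X) Y = tr (\<lambda>b. comm Z (comm X (comm Y b))) - tr (\<lambda>b. comm X (comm Z (comm Y b)))" .
  have "killing g0 X (comm Z Y) = tr (\<lambda>b. comm X (comm Z (comm Y b)) - comm X (comm Y (comm Z b)))"
    unfolding killing_eq jacobi_ad comm_diff_right ..
  also have "\<dots> = tr (\<lambda>b. comm X (comm Z (comm Y b))) - tr (\<lambda>b. comm X (comm Y (comm Z b)))"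
    by (rule tr_diff) (simp_all add: ad_in X Y Z)
  finally have 2: "killing g0 X (comm Z Y) = tr (\<lambda>b. comm X (comm Z (comm Y b))) - tr (\<lambda>b. comm X (comm Y (comm Z b)))" .
  have 3: "tr (\<lambda>b. comm Z (comm X (comm Y b))) = tr (\<lambda>b. comm X (comm Y (comm Z b)))"
    using tr_swap[OF lin_comm[OF Z] lin_comp[OF lin_comm[OF X] lin_comm[OF Y]]] .
  show ?thesis using 1 2 3 by simp
qed

lemma kill_th: assumes X: "X \<in> g0" and Y: "Y \<in> g0"
  shows "killing g0 (\<theta> X) (\<theta> Y) = killing g0 X Y"
proof -
  have "killing g0 (\<theta> X) (\<theta> Y) = tr (\<lambda>b. \<theta> (comm X (comm Y (\<theta> b))))"
    unfolding killing_eq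
  proof (rule tr_cong)
    fix b assume b: "b \<in> g0"
    have e1: "comm (\<theta> Y) b = \<theta> (comm Y (\<theta> b))"
      using th_comm[OF Y th_in[OF b]] th_inv[OF b] by simp
    have e2: "comm (\<theta> X) (\<theta> (comm Y (\<theta> b))) = \<theta> (comm X (comm Y (\<theta> b)))"
      using th_comm[OF X ad_in[OF Y th_in[OF b]]] th_inv[OF ad_in[OF Y th_in[OF b]]] by simp
    show "comm (\<theta> X) (comm (\<theta> Y) b) = \<theta> (comm X (comm Y (\<theta> b)))"
      by (simp add: e1 e2)
  qed
  also have "\<dots> = tr (\<lambda>b. comm X (comm Y (\<theta> (\<theta> b))))"
    by (rule tr_swap[OF lin_th lin_comp[OF lin_comm[OF X] lin_comp[OF lin_comm[OF Y] lin_th]]])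
  also have "\<dots> = killing g0 X Y"
    unfolding killing_eq by (rule tr_cong) (simp add: th_inv)
  finally show ?thesis .
qed

definition beta where "beta X Y = - killing g0 X (\<theta> Y)"

lemma beta_sym: "X \<in> g0 \<Longrightarrow> Y \<in> g0 \<Longrightarrow> beta X Y = beta Y X"
  unfolding beta_def
  using kill_th[of X "\<theta> Y"] th_inv[of Y] th_in[of Y] kill_sym[of "\<theta> X" Y] th_in[of X] by simp

lemma beta_add_left: "X \<in> g0 \<Longrightarrow> X' \<in> g0 \<Longrightarrow> Y \<in> g0 \<Longrightarrow> beta (X + X') Y = beta X Y + beta X' Y"
  unfolding beta_def using kill_add_left th_in by simp
lemma beta_scale_left: "X \<in> g0 \<Longrightarrow> Y \<in> g0 \<Longrightarrow> beta (r *\<^sub>R X) Y = r * beta X Y"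
  unfolding beta_def using kill_scale_left th_in by simp
lemma beta_add_right: "X \<in> g0 \<Longrightarrow> Y \<in> g0 \<Longrightarrow> Y' \<in> g0 \<Longrightarrow> beta X (Y + Y') = beta X Y + beta X Y'"
  using beta_add_left[of Y Y' X] beta_sym g0_add by simp
lemma beta_scale_right: "X \<in> g0 \<Longrightarrow> Y \<in> g0 \<Longrightarrow> beta X (r *\<^sub>R Y) = r * beta X Y"
  using beta_scale_left[of Y X r] beta_sym g0_scale by simp
lemma beta_diff_left: "X \<in> g0 \<Longrightarrow> X' \<in> g0 \<Longrightarrow> Y \<in> g0 \<Longrightarrow> beta (X - X') Y = beta X Y - beta X' Y"
  using beta_add_left[of X "- X'" Y] beta_scale_left[of X' Y "-1"] g0_neg by simp
lemma beta_diff_right: "X \<in> g0 \<Longrightarrow> Y \<in> g0 \<Longrightarrow> Y' \<in> g0 \<Longrightarrow> beta X (Y - Y') = beta X Y - beta X Y'"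
  using beta_diff_left[of Y Y' X] beta_sym g0_diff by simp
lemma beta_pos: "X \<in> g0 \<Longrightarrow> X \<noteq> 0 \<Longrightarrow> beta X X > 0"
  unfolding beta_def using th_pos by simp
lemma beta_zero_left[simp]: "beta 0 Y = 0"
  unfolding beta_def killing_eq tr_def by (simp add: representation_zero)
lemma beta_nonneg: "X \<in> g0 \<Longrightarrow> beta X X \<ge> 0"
  using beta_pos[of X] by (cases "X = 0") auto
lemma beta_eq0: "X \<in> g0 \<Longrightarrow> beta X X = 0 \<Longrightarrow> X = 0"
  using beta_pos[of X] by fastforce

lemma beta_selfadj: assumes H: "H \<in> g0" "\<theta> H = - H" and X: "X \<in> g0" and Y: "Y \<in> g0"
  shows "beta (comm H X) Y = beta X (comm H Y)"
proof -
  have e: "comm H (\<theta> Y) = - \<theta> (comm H Y)"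
    using th_comm[OF H(1) Y] H(2) by (simp add: comm_neg_left)
  have "beta (comm H X) Y = killing g0 X (comm H (\<theta> Y))"
    unfolding beta_def using kill_inv[OF X th_in[OF Y] H(1)] by simp
  also have "\<dots> = beta X (comm H Y)"
    unfolding e beta_def using kill_neg_right[OF X th_in[OF ad_in[OF H(1) Y]]] by simp
  finally show ?thesis .
qed

end

lemma span_disjoint_Int:
  fixes C :: "'a::euclidean_space set"
  assumes C: "independent C" and B: "B \<subseteq> C" and D: "D \<subseteq> C" and BD: "B \<inter> D = {}"
    and x: "x \<in> span B" "x \<in> span D"
  shows "x = 0"
proof -
  have fC: "finite C" using C finiteI_independent by blast
  have iB: "independent B" and iD: "independent D" using C B D independent_mono by blast+
  have r1: "representation C x = representation B x" by (rule representation_extend[OF C x(1) B])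
  have r2: "representation C x = representation D x" by (rule representation_extend[OF C x(2) D])
  have z: "representation C x b = 0" for b
  proof (cases "b \<in> B")
    case True
    then have "b \<notin> D" using BD by blast
    then have "representation D x b = 0" using representation_ne_zero by blast
    then show ?thesis using r2 by simp
  next
    case False
    then have "representation B x b = 0" using representation_ne_zero by blast
    then show ?thesis using r1 by simp
  qed
  have xC: "x \<in> span C" using x(1) B span_mono by blast
  have "x = (\<Sum>b\<in>C. representation C x b *\<^sub>R b)"
    using sum_representation_eq[OF C xC fC] by simp
  then show ?thesis by (simp add: z)
qed

lemma rank_nullity_sub:
  fixes f :: "'a::euclidean_space \<Rightarrow> 'b::euclidean_space"
  assumes f: "linear f" and V: "subspace V"
  shows "dim {v\<in>V. f v = 0} + dim (f ` V) = dim V"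
proof -
  define K where "K = {v\<in>V. f v = 0}"
  have KV: "K \<subseteq> V" by (auto simp: K_def)
  obtain B where B: "B \<subseteq> K" "independent B" "K \<subseteq> span B" "card B = dim K"
    by (rule basis_exists)
  obtain C where C: "B \<subseteq> C" "C \<subseteq> V" "independent C" "V \<subseteq> span C"
    using maximal_independent_subset_extend[of B V] B KV by blast
  have fC: "finite C" using C(3) finiteI_independent by blast
  define D where "D = C - B"
  have DC: "D \<subseteq> C" and fD: "finite D" using fC by (auto simp: D_def)
  have iD: "independent D" using C(3) DC independent_mono by blast
  have cardC: "card C = card B + card D"
    unfolding D_def using C(1) fC by (metis card_Diff_subset card_mono finite_subset le_add_diff_inverse)
  have dimV: "dim V = card C" using basis_card_eq_dim[OF C(2) C(4) C(3)] by simp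
  have fB0: "f b = 0" if "b \<in> B" for b using that B(1) by (auto simp: K_def)
  have spanD_V: "span D \<subseteq> V" using DC C(2) V span_minimal by blast
  have img: "f ` V = span (f ` D)"
  proof
    show "f ` V \<subseteq> span (f ` D)"
    proof
      fix y assume "y \<in> f ` V"
      then obtain v where v: "v \<in> V" "y = f v" by blast
      then have "v \<in> span C" using C(4) by blast
      then have "f v \<in> span (f ` C)" using linear_span_image[OF f, of C] by blast
      moreover have "span (f ` C) \<subseteq> span (f ` D)"
      proof (rule span_minimal[OF _ subspace_span])
        show "f ` C \<subseteq> span (f ` D)"
        proof
          fix z assume "z \<in> f ` C"
          then obtain c where c: "c \<in> C" "z = f c" by blast
          show "z \<in> span (f ` D)"
          proof (cases "c \<in> B")
            case True then show ?thesis using c fB0 span_zero by simp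
          next
            case False then have "c \<in> D" using c by (simp add: D_def)
            then show ?thesis using c span_base by blast
          qed
        qed
      qed
      ultimately show "y \<in> span (f ` D)" using v by blast
    qed
    show "span (f ` D) \<subseteq> f ` V"
    proof (rule span_minimal)
      show "f ` D \<subseteq> f ` V" using DC C(2) by blast
      show "subspace (f ` V)" by (rule linear_subspace_image[OF f V])
    qed
  qed
  have inj: "inj_on f (span D)"
  proof (rule linear_inj_on_iff_eq_0[OF f subspace_span, THEN iffD2], intro ballI impI)
    fix x assume x: "x \<in> span D" "f x = 0"
    then have "x \<in> K" using spanD_V by (auto simp: K_def)
    then have "x \<in> span B" using B(3) by blast
    moreover have "B \<inter> D = {}" by (auto simp: D_def)
    ultimately show "x = 0" using span_disjoint_Int[OF C(3) C(1) DC _ _ x(1)] by blast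
  qed
  have "dim (f ` V) = dim (f ` D)" using img by simp
  also have "\<dots> = dim D" by (rule dim_image_eq[OF f inj])
  also have "\<dots> = card D" using iD by (rule dim_eq_card_independent)
  finally show ?thesis using cardC dimV B(4) K_def by simp
qed

lemma comm_Rep: "comm X Y = Rep_M (Abs_M X * Abs_M Y - Abs_M Y * Abs_M X)"
  by (simp add: Abs_M_comm[symmetric])

lemma cont_comm:
  assumes "continuous_on S f" "continuous_on S g"
  shows "continuous_on S (\<lambda>v. comm (f v) (g v))"
proof -
  have f: "continuous_on S (\<lambda>v. Abs_M (f v))" and g: "continuous_on S (\<lambda>v. Abs_M (g v))"
    using assms bounded_linear.continuous_on[OF bounded_linear_Abs_M] by blast+
  have "continuous_on S (\<lambda>v. Rep_M (Abs_M (f v) * Abs_M (g v) - Abs_M (g v) * Abs_M (f v)))"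
    by (intro bounded_linear.continuous_on[OF bounded_linear_Rep_M] continuous_intros f g)
  then show ?thesis by (simp add: comm_Rep)
qed

lemma quad_zero:
  fixes a b :: real
  assumes b: "b \<ge> 0" and q: "\<And>t. 0 \<le> 2 * t * a + t^2 * b"
  shows "a = 0"
proof (rule ccontr)
  assume a: "a \<noteq> 0"
  define t where "t = - a / (b + 1)"
  have b1: "b + 1 > 0" using b by simp
  have "0 \<le> 2 * t * a + t^2 * b" by (rule q)
  then have "0 \<le> (2 * t * a + t^2 * b) * (b + 1)^2" using b1 by simp
  also have "(2 * t * a + t^2 * b) * (b + 1)^2 = 2 * a * (t * (b + 1)) * (b + 1) + (t * (b + 1))^2 * b"
    by (simp add: algebra_simps power2_eq_square)
  also have "t * (b + 1) = - a" unfolding t_def using b1 by simp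
  also have "2 * a * (- a) * (b + 1) + (- a)^2 * b = a^2 * (- b - 2)"
    by (simp add: algebra_simps power2_eq_square)
  finally have "0 \<le> a^2 * (- b - 2)" .
  moreover have "a^2 > 0" using a by simp
  ultimately show False using b by (simp add: zero_le_mult_iff)
qed

context lc
begin

definition Bx where "Bx = (SOME B. Bs \<subseteq> B \<and> independent B \<and> UNIV \<subseteq> span B)"

lemma Bx_ex: "Bs \<subseteq> Bx \<and> independent Bx \<and> UNIV \<subseteq> span Bx"
proof -
  obtain B where "Bs \<subseteq> B" "B \<subseteq> UNIV" "independent B" "UNIV \<subseteq> span B"
    by (rule maximal_independent_subset_extend[OF subset_UNIV Bs_ind])
  then have "\<exists>B. Bs \<subseteq> B \<and> independent B \<and> UNIV \<subseteq> span B" by (intro exI conjI)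
  then show ?thesis unfolding Bx_def by (rule someI_ex)
qed

lemma Bx_sup: "Bs \<subseteq> Bx" using conjunct1[OF Bx_ex] .
lemma Bx_ind: "independent Bx" using conjunct1[OF conjunct2[OF Bx_ex]] .
lemma Bx_span: "span Bx = UNIV" using conjunct2[OF conjunct2[OF Bx_ex]] by blast

lemma rep_Bx: "v \<in> g0 \<Longrightarrow> representation Bs v = representation Bx v"
  using representation_extend[OF Bx_ind in_spanBs Bx_sup] by simp

lemma cont_rep: "continuous_on S (\<lambda>v. representation Bx (f v) b)" if "continuous_on S f"
  using bounded_linear.continuous_on[OF bounded_linear_representation[OF Bx_ind Bx_span] that] .

definition thx where "thx v = (\<Sum>c\<in>Bs. representation Bx v c *\<^sub>R \<theta> c)"

lemma thx_eq: "v \<in> g0 \<Longrightarrow> \<theta> v = thx v"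
  unfolding thx_def using lin_expand[OF lin_th, of v] rep_Bx[of v] by simp

lemma cont_thx: "continuous_on S thx"
  unfolding thx_def
  by (intro continuous_intros cont_rep continuous_on_id)

lemma killing_x: "X \<in> g0 \<Longrightarrow> Y \<in> g0 \<Longrightarrow>
    killing g0 X Y = (\<Sum>b\<in>Bs. representation Bx (comm X (comm Y b)) b)"
  unfolding killing_eq tr_def using Bs_sub
  by (intro sum.cong refl) (simp add: rep_Bx ad_in subset_eq)

lemma cont_beta_T:
  assumes H: "H \<in> g0"
  shows "continuous_on g0 (\<lambda>v. beta (comm H v) v)"
proof -
  have "continuous_on g0 (\<lambda>v. - (\<Sum>b\<in>Bs. representation Bx (comm (comm H v) (comm (thx v) b)) b))"
    by (intro continuous_intros cont_rep cont_comm continuous_on_id continuous_on_const cont_thx)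
  moreover have "beta (comm H v) v = - (\<Sum>b\<in>Bs. representation Bx (comm (comm H v) (comm (thx v) b)) b)"
    if "v \<in> g0" for v
    unfolding beta_def using that H
    by (simp add: killing_x ad_in th_in thx_eq[symmetric])
  ultimately show ?thesis using continuous_on_cong by force
qed

lemma cont_beta_id: "continuous_on g0 (\<lambda>v. beta v v)"
proof -
  have "continuous_on g0 (\<lambda>v. - (\<Sum>b\<in>Bs. representation Bx (comm v (comm (thx v) b)) b))"
    by (intro continuous_intros cont_rep cont_comm continuous_on_id continuous_on_const cont_thx)
  moreover have "beta v v = - (\<Sum>b\<in>Bs. representation Bx (comm v (comm (thx v) b)) b)"
    if "v \<in> g0" for v
    unfolding beta_def using that
    by (simp add: killing_x th_in thx_eq[symmetric])
  ultimately show ?thesis using continuous_on_cong by force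
qed

lemma beta_T_scale: "H \<in> g0 \<Longrightarrow> v \<in> g0 \<Longrightarrow> beta (comm H (r *\<^sub>R v)) (r *\<^sub>R v) = r^2 * beta (comm H v) v"
  by (simp add: comm_scale_right beta_scale_left beta_scale_right ad_in g0_scale power2_eq_square)

lemma beta_id_scale: "v \<in> g0 \<Longrightarrow> beta (r *\<^sub>R v) (r *\<^sub>R v) = r^2 * beta v v"
  by (simp add: beta_scale_left beta_scale_right g0_scale power2_eq_square)

lemma eigen_exists:
  assumes V: "subspace V" "V \<subseteq> g0" "V \<noteq> {0}" and H: "H \<in> g0" "\<theta> H = - H"
    and inv: "\<And>v. v \<in> V \<Longrightarrow> comm H v \<in> V"
  shows "\<exists>v\<in>V. v \<noteq> 0 \<and> (\<exists>c. comm H v = c *\<^sub>R v)"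
proof -
  define S where "S = V \<inter> sphere 0 1"
  have "compact (sphere (0::'n cmat) 1 \<inter> V)"
    by (rule compact_Int_closed[OF compact_sphere closed_subspace[OF V(1)]])
  then have cS: "compact S" unfolding S_def by (simp add: Int_commute)
  have SV: "S \<subseteq> V" by (auto simp: S_def)
  obtain w where w: "w \<in> V" "w \<noteq> 0" using V(3) subspace_0[OF V(1)] by blast
  have "(1 / norm w) *\<^sub>R w \<in> S" using w V(1) by (simp add: S_def subspace_scale)
  then have neS: "S \<noteq> {}" by blast
  have pos: "beta v v > 0" if "v \<in> S" for v
    using that SV V(2) by (intro beta_pos) (auto simp: S_def)
  define R where "R = (\<lambda>v. beta (comm H v) v / beta v v)"
  have cR: "continuous_on S R" unfolding R_def
  proof (rule continuous_on_divide)
    show "continuous_on S (\<lambda>v. beta (comm H v) v)"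
      using continuous_on_subset[OF cont_beta_T[OF H(1)]] SV V(2) by blast
    show "continuous_on S (\<lambda>v. beta v v)"
      using continuous_on_subset[OF cont_beta_id] SV V(2) by blast
    show "\<forall>x\<in>S. beta x x \<noteq> 0" using pos by force
  qed
  obtain v0 where v0: "v0 \<in> S" "\<And>y. y \<in> S \<Longrightarrow> R y \<le> R v0"
    using continuous_attains_sup[OF cS neS cR] by blast
  define c where "c = R v0"
  have v0V: "v0 \<in> V" "v0 \<in> g0" "v0 \<noteq> 0" using v0(1) SV V(2) by (auto simp: S_def)
  have bound: "beta (comm H x) x \<le> c * beta x x" if x: "x \<in> V" for x
  proof (cases "x = 0")
    case True then show ?thesis by simp
  next
    case False
    define u where "u = (1 / norm x) *\<^sub>R x"
    have uS: "u \<in> S" using x False V(1) by (simp add: u_def S_def subspace_scale)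
    have xg: "x \<in> g0" using x V(2) by blast
    have bx: "beta x x > 0" using beta_pos[OF xg False] .
    have "R u = R x" unfolding R_def u_def
      using beta_T_scale[OF H(1) xg] beta_id_scale[OF xg] False by simp
    then have "R x \<le> c" using v0(2)[OF uS] by (simp add: c_def)
    then show ?thesis using bx by (simp add: R_def divide_le_eq)
  qed
  define D where "D = (\<lambda>w. c *\<^sub>R w - comm H w)"
  have DV: "D w \<in> V" if "w \<in> V" for w
    using that inv V(1) by (simp add: D_def subspace_diff subspace_scale)
  have Dg: "D w \<in> g0" if "w \<in> g0" for w
    using that H(1) by (simp add: D_def g0_diff g0_scale ad_in)
  have Dadd: "D (x + t *\<^sub>R y) = D x + t *\<^sub>R D y" for x y t
    by (simp add: D_def comm_add_right comm_scale_right algebra_simps)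
  have Dsa: "beta (D x) y = beta x (D y)" if "x \<in> g0" "y \<in> g0" for x y
    using that H unfolding D_def
    by (simp add: beta_diff_left beta_diff_right beta_scale_left beta_scale_right
        g0_scale ad_in beta_selfadj)
  have qnn: "beta (D x) x \<ge> 0" if "x \<in> V" for x
  proof -
    have xg: "x \<in> g0" using that V(2) by blast
    have "beta (D x) x = c * beta x x - beta (comm H x) x"
      unfolding D_def using xg H(1) by (simp add: beta_diff_left beta_scale_left g0_scale ad_in)
    then show ?thesis using bound[OF that] by simp
  qed
  have q0: "beta (D v0) v0 = 0"
  proof -
    have "beta (D v0) v0 = c * beta v0 v0 - beta (comm H v0) v0"
      unfolding D_def using v0V H(1) by (simp add: beta_diff_left beta_scale_left g0_scale ad_in)
    moreover have "beta v0 v0 > 0" using pos v0(1) by blast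
    ultimately show ?thesis by (simp add: c_def R_def)
  qed
  have orth: "beta (D v0) u = 0" if u: "u \<in> V" for u
  proof -
    have ug: "u \<in> g0" using u V(2) by blast
    have "0 \<le> 2 * t * beta (D v0) u + t^2 * beta (D u) u" for t
    proof -
      have "v0 + t *\<^sub>R u \<in> V" using v0V u V(1) by (simp add: subspace_add subspace_scale)
      then have "0 \<le> beta (D (v0 + t *\<^sub>R u)) (v0 + t *\<^sub>R u)" by (rule qnn)
      also have "\<dots> = beta (D v0) v0 + t * beta (D v0) u + t * beta (D u) v0 + t^2 * beta (D u) u"
        unfolding Dadd using v0V ug Dg
        by (simp add: beta_add_left beta_add_right beta_scale_left beta_scale_right g0_scale g0_add
            algebra_simps power2_eq_square)
      also have "beta (D u) v0 = beta (D v0) u"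
        using Dsa[OF ug v0V(2)] beta_sym[OF ug Dg[OF v0V(2)]] by simp
      finally show ?thesis using q0 by simp
    qed
    then show ?thesis by (rule quad_zero[OF qnn[OF u]])
  qed
  have "beta (D v0) (D v0) = 0" by (rule orth[OF DV[OF v0V(1)]])
  then have "D v0 = 0" using beta_eq0 Dg[OF v0V(2)] by blast
  then have "comm H v0 = c *\<^sub>R v0" by (simp add: D_def)
  then show ?thesis using v0V by blast
qed

end

context lc
begin

definition JE where "JE a = {X \<in> g0. \<forall>H\<in>a. \<exists>c. comm H X = c *\<^sub>R X}"

lemma comm_commute_ad:
  assumes "comm H H' = 0"
  shows "comm H (comm H' w) = comm H' (comm H w)"
  using jacobi_ad[of H H' w] assms by simp

lemma diag:
  assumes a: "\<And>H. H \<in> a \<Longrightarrow> H \<in> g0 \<and> \<theta> H = - H"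
    and ab: "\<And>H H'. H \<in> a \<Longrightarrow> H' \<in> a \<Longrightarrow> comm H H' = 0"
  shows "subspace V \<Longrightarrow> V \<subseteq> g0 \<Longrightarrow> (\<forall>H\<in>a. \<forall>v\<in>V. comm H v \<in> V) \<Longrightarrow> V \<subseteq> span (JE a \<inter> V)"
proof (induction "dim V" arbitrary: V rule: less_induct)
  case less
  note V = less.prems
  show ?case
  proof (cases "\<forall>H\<in>a. \<exists>c. \<forall>v\<in>V. comm H v = c *\<^sub>R v")
    case True
    have "V \<subseteq> JE a \<inter> V"
    proof
      fix v assume v: "v \<in> V"
      have "\<forall>H\<in>a. \<exists>c. comm H v = c *\<^sub>R v" using True v by blast
      then show "v \<in> JE a \<inter> V" using v V(2) by (auto simp: JE_def)
    qed
    then show ?thesis using span_superset by blast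
  next
    case False
    then obtain H where H: "H \<in> a" and ns: "\<not> (\<exists>c. \<forall>v\<in>V. comm H v = c *\<^sub>R v)" by blast
    have Hg: "H \<in> g0" "\<theta> H = - H" using a[OF H] by auto
    have Vne: "V \<noteq> {0}"
    proof
      assume "V = {0}"
      then have "\<forall>v\<in>V. comm H v = 0 *\<^sub>R v" by simp
      then show False using ns by blast
    qed
    have invH: "\<And>v. v \<in> V \<Longrightarrow> comm H v \<in> V" using V(3) H by blast
    obtain v0 c where v0: "v0 \<in> V" "v0 \<noteq> 0" "comm H v0 = c *\<^sub>R v0"
      using eigen_exists[OF V(1) V(2) Vne Hg invH] by blast
    define f where "f = (\<lambda>w. comm H w - c *\<^sub>R w)"
    have lf: "linear f" unfolding f_def
      by (rule linearI) (simp_all add: comm_add_right comm_scale_right algebra_simps)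
    define K where "K = {v\<in>V. f v = 0}"
    define R where "R = f ` V"
    have fV: "f v \<in> V" if "v \<in> V" for v
      using that invH V(1) by (simp add: f_def subspace_diff subspace_scale)
    have KV: "K \<subseteq> V" by (auto simp: K_def)
    have RV: "R \<subseteq> V" using fV by (auto simp: R_def)
    have sK: "subspace K"
      unfolding subspace_def K_def
      using V(1) linear_add[OF lf] linear_scale[OF lf] linear_0[OF lf]
      by (auto simp: subspace_add subspace_scale subspace_0)
    have sR: "subspace R" unfolding R_def by (rule linear_subspace_image[OF lf V(1)])
    have fcomm: "f (comm H' w) = comm H' (f w)" if "H' \<in> a" for H' w
      using comm_commute_ad[OF ab[OF H that], of w]
      by (simp add: f_def comm_diff_right comm_scale_right)
    have invK: "\<forall>H'\<in>a. \<forall>v\<in>K. comm H' v \<in> K"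
      using V(3) fcomm by (auto simp: K_def)
    have invR: "\<forall>H'\<in>a. \<forall>v\<in>R. comm H' v \<in> R"
    proof (intro ballI)
      fix H' v assume H': "H' \<in> a" and v: "v \<in> R"
      then obtain u where u: "u \<in> V" "v = f u" by (auto simp: R_def)
      then have "comm H' v = f (comm H' u)" using fcomm[OF H'] by simp
      moreover have "comm H' u \<in> V" using V(3) H' u by blast
      ultimately show "comm H' v \<in> R" by (auto simp: R_def)
    qed
    have fsa: "beta (f x) y = beta x (f y)" if "x \<in> g0" "y \<in> g0" for x y
      using that Hg unfolding f_def
      by (simp add: beta_diff_left beta_diff_right beta_scale_left beta_scale_right
          g0_scale ad_in beta_selfadj)
    have KR0: "K \<inter> R \<subseteq> {0}"
    proof
      fix w assume w: "w \<in> K \<inter> R"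
      then obtain u where u: "u \<in> V" "w = f u" by (auto simp: R_def)
      have wg: "w \<in> g0" and ug: "u \<in> g0" using w u KV V(2) by auto
      have fw: "f w = 0" using w by (auto simp: K_def)
      have "beta w w = beta u (f w)" using fsa[OF ug wg] u by simp
      also have "\<dots> = 0" using fw beta_scale_right[OF ug g0_zero, of 0] by simp
      finally have "w = 0" using beta_eq0[OF wg] by blast
      then show "w \<in> {0}" by simp
    qed
    have rn: "dim K + dim R = dim V"
      unfolding K_def R_def by (rule rank_nullity_sub[OF lf V(1)])
    have KneV: "K \<noteq> V"
    proof
      assume "K = V"
      then have "\<forall>v\<in>V. comm H v = c *\<^sub>R v" by (auto simp: K_def f_def)
      then show False using ns by blast
    qed
    have dK: "dim K < dim V"
    proof (rule ccontr)
      assume "\<not> dim K < dim V"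
      then have "K = V" using subspace_dim_equal[OF sK V(1) KV] by simp
      then show False using KneV by blast
    qed
    have v0K: "v0 \<in> K" using v0 by (simp add: K_def f_def)
    have "\<not> K \<subseteq> {0}" using v0K v0(2) by blast
    then have "dim K \<noteq> 0" by (simp add: dim_eq_0)
    then have dR: "dim R < dim V" using rn by linarith
    have IHK: "K \<subseteq> span (JE a \<inter> K)"
      using less.hyps[OF dK sK] KV V(2) invK by blast
    have IHR: "R \<subseteq> span (JE a \<inter> R)"
      using less.hyps[OF dR sR] RV V(2) invR by blast
    define KR where "KR = {x + y |x y. x \<in> K \<and> y \<in> R}"
    have sKR: "subspace KR" unfolding KR_def by (rule subspace_sums[OF sK sR])
    have KRV: "KR \<subseteq> V" unfolding KR_def using KV RV V(1) subspace_add by blast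
    have "dim KR + dim (K \<inter> R) = dim K + dim R" unfolding KR_def by (rule dim_sums_Int[OF sK sR])
    moreover have "dim (K \<inter> R) = 0" using KR0 by (simp add: dim_eq_0)
    ultimately have "dim V \<le> dim KR" using rn by simp
    then have KReq: "KR = V" using subspace_dim_equal[OF sKR V(1) KRV] by simp
    show ?thesis
    proof
      fix v assume "v \<in> V"
      then obtain x y where xy: "v = x + y" "x \<in> K" "y \<in> R" using KReq by (auto simp: KR_def)
      have "x \<in> span (JE a \<inter> V)" using IHK xy(2) span_mono[of "JE a \<inter> K" "JE a \<inter> V"] KV by blast
      moreover have "y \<in> span (JE a \<inter> V)" using IHR xy(3) span_mono[of "JE a \<inter> R" "JE a \<inter> V"] RV by blast
      ultimately show "v \<in> span (JE a \<inter> V)" using xy(1) span_add by blast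
    qed
  qed
qed

end

locale lc2 = lc g0 \<theta> for g0 :: "'n::finite cmat set" and \<theta> +
  fixes a0 :: "'n cmat set" and H0 :: "'n cmat"
  assumes max: "max_abelian_in (ppart g0 \<theta>) a0"
    and reg: "regular_element g0 a0 H0"
begin

abbreviation "k0 \<equiv> kpart g0 \<theta>"
abbreviation "n0 \<equiv> npart g0 a0 H0"
abbreviation "u0 \<equiv> upart g0 a0 H0"

lemma a0_sub: "subspace a0" and a0_p: "a0 \<subseteq> ppart g0 \<theta>" and a0_ab: "abelian a0"
  and a0_max: "\<And>b. subspace b \<Longrightarrow> a0 \<subseteq> b \<Longrightarrow> b \<subseteq> ppart g0 \<theta> \<Longrightarrow> abelian b \<Longrightarrow> b = a0"
  using max unfolding max_abelian_in_def by blast+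

lemma a0_g0: "H \<in> a0 \<Longrightarrow> H \<in> g0" and a0_th: "H \<in> a0 \<Longrightarrow> \<theta> H = - H"
  using a0_p by (auto simp: ppart_def)

lemma a0_comm: "H \<in> a0 \<Longrightarrow> H' \<in> a0 \<Longrightarrow> comm H H' = 0"
  using a0_ab by (simp add: abelian_def)

lemma H0_a0: "H0 \<in> a0" and H0_reg: "\<And>r. restricted_root g0 a0 r \<Longrightarrow> r H0 \<noteq> 0"
  using reg by (auto simp: regular_element_def)

lemma k0_sub: "subspace k0"
  unfolding subspace_def kpart_def
  by (auto simp: g0_zero th_zero g0_add th_add g0_scale th_scale)

lemma p0_sub: "subspace (ppart g0 \<theta>)"
  unfolding subspace_def ppart_def
  by (auto simp: g0_zero th_zero g0_add th_add g0_scale th_scale)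

lemma root_space_g0: "root_space g0 a0 r \<subseteq> g0"
  by (auto simp: root_space_def)

lemma n0_g0: "n0 \<subseteq> g0"
  unfolding npart_def using root_space_g0 sub by (intro span_minimal) auto

lemma u0_sub: "subspace u0"
proof -
  have "subspace n0" unfolding npart_def by (rule subspace_span)
  then show ?thesis unfolding upart_def by (rule subspace_sums[OF a0_sub])
qed

lemma a0_u0: "A \<in> a0 \<Longrightarrow> A \<in> u0"
  unfolding upart_def using span_zero[of "\<Union>{root_space g0 a0 r |r. restricted_root g0 a0 r \<and> r H0 > 0}"]
  by (force simp: npart_def)

lemma n0_u0: "N \<in> n0 \<Longrightarrow> N \<in> u0"
  unfolding upart_def using subspace_0[OF a0_sub] by force

lemma root_n0: "restricted_root g0 a0 r \<Longrightarrow> r H0 > 0 \<Longrightarrow> X \<in> root_space g0 a0 r \<Longrightarrow> X \<in> n0"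
  unfolding npart_def by (rule span_base) blast

definition Esum where "Esum = {X. \<exists>K\<in>k0. X - K \<in> u0}"

lemma Esum_sub: "subspace Esum"
  unfolding subspace_def Esum_def
proof (intro conjI ballI allI CollectI)
  show "\<exists>K\<in>k0. 0 - K \<in> u0" using subspace_0[OF k0_sub] subspace_0[OF u0_sub] by force
next
  fix x y assume "x \<in> {X. \<exists>K\<in>k0. X - K \<in> u0}" "y \<in> {X. \<exists>K\<in>k0. X - K \<in> u0}"
  then obtain K L where "K \<in> k0" "x - K \<in> u0" "L \<in> k0" "y - L \<in> u0" by blast
  then have "K + L \<in> k0" "(x + y) - (K + L) \<in> u0"
    using subspace_add[OF k0_sub] subspace_add[OF u0_sub, of "x - K" "y - L"] by (auto simp: algebra_simps)
  then show "\<exists>K\<in>k0. x + y - K \<in> u0" by blast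
next
  fix c :: real and x assume "x \<in> {X. \<exists>K\<in>k0. X - K \<in> u0}"
  then obtain K where "K \<in> k0" "x - K \<in> u0" by blast
  then have "c *\<^sub>R K \<in> k0" "c *\<^sub>R x - c *\<^sub>R K \<in> u0"
    using subspace_scale[OF k0_sub] subspace_scale[OF u0_sub, of "x - K" c] by (auto simp: algebra_simps)
  then show "\<exists>K\<in>k0. c *\<^sub>R x - K \<in> u0" by blast
qed

lemma th_comm_a0: "H \<in> a0 \<Longrightarrow> Y \<in> g0 \<Longrightarrow> comm H (\<theta> Y) = - \<theta> (comm H Y)"
  using th_comm[OF a0_g0 , of H Y] a0_th[of H] by (simp add: comm_neg_left)

lemma JE_Esum: "JE a0 \<subseteq> Esum"
proof
  fix X assume "X \<in> JE a0"
  then have Xg: "X \<in> g0" and ev: "\<forall>H\<in>a0. \<exists>c. comm H X = c *\<^sub>R X" by (auto simp: JE_def)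
  show "X \<in> Esum"
  proof (cases "X = 0")
    case True
    then show ?thesis unfolding Esum_def
      using subspace_0[OF k0_sub] subspace_0[OF u0_sub] by force
  next
    case Xne: False
    define r where "r = (\<lambda>H. if H \<in> a0 then (SOME c. comm H X = c *\<^sub>R X) else 0)"
    have rX: "comm H X = r H *\<^sub>R X" if "H \<in> a0" for H
      using someI_ex[OF ev[rule_format, OF that]] that by (simp add: r_def)
    have r_add: "r (H + H') = r H + r H'" if "H \<in> a0" "H' \<in> a0" for H H'
    proof -
      have "H + H' \<in> a0" using that subspace_add[OF a0_sub] by blast
      then have "r (H + H') *\<^sub>R X = comm (H + H') X" using rX by simp
      also have "\<dots> = comm H X + comm H' X" by (rule comm_add_left)
      also have "\<dots> = (r H + r H') *\<^sub>R X" using rX that by (simp add: scaleR_add_left)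
      finally have "r (H + H') *\<^sub>R X = (r H + r H') *\<^sub>R X" .
      then show ?thesis using Xne by simp
    qed
    have r_scale: "r (c *\<^sub>R H) = c * r H" if "H \<in> a0" for H c
    proof -
      have "c *\<^sub>R H \<in> a0" using that subspace_scale[OF a0_sub] by blast
      then have "r (c *\<^sub>R H) *\<^sub>R X = comm (c *\<^sub>R H) X" using rX by simp
      also have "\<dots> = c *\<^sub>R comm H X" by (rule comm_scale_left)
      also have "\<dots> = (c * r H) *\<^sub>R X" using rX that by simp
      finally have "r (c *\<^sub>R H) *\<^sub>R X = (c * r H) *\<^sub>R X" .
      then show ?thesis using Xne by simp
    qed
    have r_out: "\<forall>H. H \<notin> a0 \<longrightarrow> r H = 0" by (simp add: r_def)
    show ?thesis
    proof (cases "\<exists>H\<in>a0. r H \<noteq> 0")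
      case False
      then have cz: "comm H X = 0" if "H \<in> a0" for H using rX[OF that] that by simp
      define K where "K = (1/2) *\<^sub>R (X + \<theta> X)"
      define P where "P = (1/2) *\<^sub>R (X - \<theta> X)"
      have hX: "X = (1/2) *\<^sub>R X + (1/2) *\<^sub>R X" by (simp add: scaleR_add_left[symmetric])
      have XKP: "X - K = P"
        unfolding K_def P_def scaleR_add_right scaleR_diff_right by (subst (1) hX) simp
      have Kg: "K \<in> g0" using Xg th_in[OF Xg] by (simp add: K_def g0_scale g0_add)
      have "\<theta> K = (1/2) *\<^sub>R (\<theta> X + X)"
        using Xg th_in[OF Xg] by (simp add: K_def th_scale g0_add th_add th_inv)
      then have Kk: "K \<in> k0" using Kg by (simp add: kpart_def K_def add.commute)
      have Pg: "P \<in> g0" using Xg th_in[OF Xg] by (simp add: P_def g0_scale g0_diff)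
      have "\<theta> P = (1/2) *\<^sub>R (\<theta> X - X)"
        using Xg th_in[OF Xg] by (simp add: P_def th_scale g0_diff th_diff th_inv)
      then have Pp: "P \<in> ppart g0 \<theta>" using Pg
        by (simp add: ppart_def P_def scaleR_diff_right)
      have cP: "comm H P = 0" if "H \<in> a0" for H
        using cz[OF that] th_comm_a0[OF that Xg] th_zero
        by (simp add: P_def comm_scale_right comm_diff_right)
      define b where "b = {A + t *\<^sub>R P |A t. A \<in> a0}"
      have sb: "subspace b"
      proof -
        have "subspace (span {P})" by (rule subspace_span)
        then have "subspace {x + y |x y. x \<in> a0 \<and> y \<in> span {P}}"
          by (rule subspace_sums[OF a0_sub])
        moreover have "{x + y |x y. x \<in> a0 \<and> y \<in> span {P}} = b"
          unfolding b_def span_singleton by blast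
        ultimately show ?thesis by simp
      qed
      have ab: "a0 \<subseteq> b" unfolding b_def by force
      have bp: "b \<subseteq> ppart g0 \<theta>"
        unfolding b_def using a0_p Pp subspace_add[OF p0_sub] subspace_scale[OF p0_sub] by blast
      have bab: "abelian b"
        unfolding abelian_def b_def
      proof (clarify)
        fix A t A' t' assume A: "A \<in> a0" "A' \<in> a0"
        have "comm (A + t *\<^sub>R P) (A' + t' *\<^sub>R P) = comm A A' + t' *\<^sub>R comm A P + t *\<^sub>R comm P A' + (t * t') *\<^sub>R comm P P"
          by (simp add: comm_add_left comm_add_right comm_scale_left comm_scale_right)
        also have "\<dots> = 0"
          using a0_comm[OF A] cP[OF A(1)] cP[OF A(2)] comm_anti[of P A'] by simp
        finally show "comm (A + t *\<^sub>R P) (A' + t' *\<^sub>R P) = 0" .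
      qed
      have "b = a0" by (rule a0_max[OF sb ab bp bab])
      then have "P \<in> a0" unfolding b_def using subspace_0[OF a0_sub]
        by (metis (mono_tags, lifting) add_0 mem_Collect_eq scaleR_one)
      then have "X - K \<in> u0" using XKP a0_u0 by simp
      then show ?thesis using Kk by (auto simp: Esum_def)
    next
      case True
      have rs: "X \<in> root_space g0 a0 r" using Xg rX by (simp add: root_space_def)
      have rr: "restricted_root g0 a0 r"
        unfolding restricted_root_def using r_out r_add r_scale True rs Xne by blast
      have rH0: "r H0 \<noteq> 0" using H0_reg[OF rr] .
      show ?thesis
      proof (cases "r H0 > 0")
        case True
        have "X \<in> n0" by (rule root_n0[OF rr True rs])
        then have "X - 0 \<in> u0" using n0_u0 by simp
        then show ?thesis unfolding Esum_def using subspace_0[OF k0_sub] by blast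
      next
        case False
        then have neg: "r H0 < 0" using rH0 by simp
        define r' where "r' = (\<lambda>H. - r H)"
        have tX: "\<theta> X \<in> root_space g0 a0 r'"
          unfolding root_space_def r'_def using th_in[OF Xg]
          by (simp add: th_comm_a0 Xg rX th_scale)
        have tXne: "\<theta> X \<noteq> 0"
        proof
          assume "\<theta> X = 0"
          then have "\<theta> (\<theta> X) = 0" using th_zero by simp
          then show False using th_inv[OF Xg] Xne by simp
        qed
        have rr': "restricted_root g0 a0 r'"
          unfolding restricted_root_def r'_def
          using r_out r_add r_scale True tX tXne by (auto simp: r'_def)
        have "\<theta> X \<in> n0" by (rule root_n0[OF rr' _ tX]) (use neg in \<open>simp add: r'_def\<close>)
        then have "- \<theta> X \<in> n0" unfolding npart_def by (rule span_neg)
        then have u: "X - (X + \<theta> X) \<in> u0" using n0_u0 by simp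
        have "X + \<theta> X \<in> k0"
          unfolding kpart_def using Xg th_in[OF Xg] by (simp add: g0_add th_add th_inv)
        then show ?thesis using u unfolding Esum_def by blast
      qed
    qed
  qed
qed

lemma iwasawa_exists: "X \<in> g0 \<Longrightarrow> \<exists>K\<in>k0. X - K \<in> u0"
proof -
  assume X: "X \<in> g0"
  have "g0 \<subseteq> span (JE a0 \<inter> g0)"
    using diag[of a0 g0] a0_g0 a0_th a0_comm sub lie by blast
  also have "\<dots> \<subseteq> span Esum" using JE_Esum by (intro span_mono) blast
  also have "\<dots> = Esum" by (rule span_eq_iff[THEN iffD2, OF Esum_sub])
  finally show ?thesis using X by (auto simp: Esum_def)
qed

lemma H0_g0: "H0 \<in> g0" and H0_th: "\<theta> H0 = - H0"
  using a0_g0[OF H0_a0] a0_th[OF H0_a0] .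

lemma eig_orth:
  assumes Y: "Y \<in> g0" and Z: "Z \<in> g0" and eY: "comm H0 Y = a *\<^sub>R Y" and eZ: "comm H0 Z = b *\<^sub>R Z"
    and ab: "a \<noteq> b"
  shows "beta Y Z = 0"
proof -
  have "a * beta Y Z = beta (comm H0 Y) Z" using eY Y Z by (simp add: beta_scale_left)
  also have "\<dots> = beta Y (comm H0 Z)" by (rule beta_selfadj[OF H0_g0 H0_th Y Z])
  also have "\<dots> = b * beta Y Z" using eZ Y Z by (simp add: beta_scale_right)
  finally have "(a - b) * beta Y Z = 0" by (simp add: algebra_simps)
  then show ?thesis using ab by simp
qed

lemma beta_zero_right: "Y \<in> g0 \<Longrightarrow> beta Y 0 = 0"
  using beta_scale_right[OF _ g0_zero, of Y 0] by simp

lemma span_g0: "S \<subseteq> g0 \<Longrightarrow> span S \<subseteq> g0"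
  using span_minimal sub by blast

lemma span_orth:
  assumes S: "S \<subseteq> g0" and T: "T \<subseteq> g0" and o: "\<And>y z. y \<in> S \<Longrightarrow> z \<in> T \<Longrightarrow> beta y z = 0"
    and y: "y \<in> span S" and z: "z \<in> span T"
  shows "beta y z = 0"
proof -
  have step1: "beta y' z' = 0" if y': "y' \<in> S" and z': "z' \<in> span T" for y' z'
  proof -
    have y'g: "y' \<in> g0" using y' S by blast
    have "subspace {z \<in> g0. beta y' z = 0}"
      unfolding subspace_def
      using y'g by (auto simp: g0_zero g0_add g0_scale beta_zero_right beta_add_right beta_scale_right)
    moreover have "T \<subseteq> {z \<in> g0. beta y' z = 0}" using T o[OF y'] by blast
    ultimately have "span T \<subseteq> {z \<in> g0. beta y' z = 0}" by (rule span_minimal[rotated])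
    then show ?thesis using z' by blast
  qed
  have zg: "z \<in> g0" using span_g0[OF T] z by blast
  have "subspace {y \<in> g0. beta y z = 0}"
    unfolding subspace_def
    using zg by (auto simp: g0_zero g0_add g0_scale beta_add_left beta_scale_left)
  moreover have "S \<subseteq> {y \<in> g0. beta y z = 0}" using S step1 z by blast
  ultimately have "span S \<subseteq> {y \<in> g0. beta y z = 0}" by (rule span_minimal[rotated])
  then show ?thesis using y by blast
qed

definition "Pp = {Y \<in> g0. \<exists>a>0. comm H0 Y = a *\<^sub>R Y}"
definition "Pm = {Y \<in> g0. \<exists>a<0. comm H0 Y = a *\<^sub>R Y}"

lemma Splus_Pp: "\<Union>{root_space g0 a0 r |r. restricted_root g0 a0 r \<and> r H0 > 0} \<subseteq> Pp"
  using H0_a0 by (auto simp: Pp_def root_space_def)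

lemma n0_span_Pp: "n0 \<subseteq> span Pp"
  unfolding npart_def using Splus_Pp by (rule span_mono)

lemma Pp_g0: "Pp \<subseteq> g0" and Pm_g0: "Pm \<subseteq> g0" by (auto simp: Pp_def Pm_def)

lemma th_Pp: "Y \<in> Pp \<Longrightarrow> \<theta> Y \<in> Pm"
proof -
  assume "Y \<in> Pp"
  then obtain a where Y: "Y \<in> g0" "a > 0" "comm H0 Y = a *\<^sub>R Y" by (auto simp: Pp_def)
  have e: "comm H0 (\<theta> Y) = (- a) *\<^sub>R \<theta> Y"
    using th_comm_a0[OF H0_a0 Y(1)] Y(3) th_scale[OF Y(1)] by simp
  have "\<exists>b<0. comm H0 (\<theta> Y) = b *\<^sub>R \<theta> Y"
    by (rule exI[of _ "- a"], rule conjI, simp add: Y(2), rule e)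
  then show "\<theta> Y \<in> Pm" using Y th_in unfolding Pm_def by blast
qed

lemma th_n0: "N \<in> n0 \<Longrightarrow> \<theta> N \<in> span Pm"
proof -
  assume N: "N \<in> n0"
  have "subspace {Y \<in> g0. \<theta> Y \<in> span Pm}"
    unfolding subspace_def
    by (auto simp: g0_zero th_zero span_zero g0_add th_add span_add g0_scale th_scale span_scale)
  moreover have "Pp \<subseteq> {Y \<in> g0. \<theta> Y \<in> span Pm}" using th_Pp Pp_g0 span_base by blast
  ultimately have "span Pp \<subseteq> {Y \<in> g0. \<theta> Y \<in> span Pm}" by (rule span_minimal[rotated])
  then show ?thesis using N n0_span_Pp by blast
qed

lemma k0_u0_zero:
  assumes Dk: "D \<in> k0" and Du: "D \<in> u0"
  shows "D = 0"
proof -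
  obtain A N where AN: "D = A + N" "A \<in> a0" "N \<in> n0" using Du unfolding upart_def by blast
  have Ag: "A \<in> g0" using a0_g0 AN(2) .
  have Ng: "N \<in> g0" using n0_g0 AN(3) by blast
  have "\<theta> D = D" using Dk by (simp add: kpart_def)
  then have "- A + \<theta> N = A + N" using AN Ag Ng by (simp add: th_add a0_th)
  then have W: "\<theta> N = A + A + N" by (simp add: algebra_simps)
  have ZA: "comm H0 A = 0 *\<^sub>R A" using a0_comm[OF H0_a0 AN(2)] by simp
  have o1: "beta A N = 0"
  proof (rule span_orth[of "{A}" Pp])
    show "{A} \<subseteq> g0" using Ag by simp
    show "Pp \<subseteq> g0" by (rule Pp_g0)
    show "A \<in> span {A}" by (rule span_base) simp
    show "N \<in> span Pp" using n0_span_Pp AN(3) by blast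
    fix y z assume "y \<in> {A}" "z \<in> Pp"
    then obtain a where yz: "y = A" "z \<in> g0" "a > 0" "comm H0 z = a *\<^sub>R z" unfolding Pp_def by blast
    have "0 \<noteq> a" using yz(3) by simp
    then show "beta y z = 0" using eig_orth[OF Ag yz(2) ZA yz(4)] yz(1) by simp
  qed
  have o2: "beta A (\<theta> N) = 0"
  proof (rule span_orth[of "{A}" Pm])
    show "{A} \<subseteq> g0" using Ag by simp
    show "Pm \<subseteq> g0" by (rule Pm_g0)
    show "A \<in> span {A}" by (rule span_base) simp
    show "\<theta> N \<in> span Pm" using th_n0 AN(3) by blast
    fix y z assume "y \<in> {A}" "z \<in> Pm"
    then obtain a where yz: "y = A" "z \<in> g0" "a < 0" "comm H0 z = a *\<^sub>R z" unfolding Pm_def by blast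
    have "0 \<noteq> a" using yz(3) by simp
    then show "beta y z = 0" using eig_orth[OF Ag yz(2) ZA yz(4)] yz(1) by simp
  qed
  have o3: "beta N (\<theta> N) = 0"
  proof (rule span_orth[of Pp Pm])
    show "Pp \<subseteq> g0" by (rule Pp_g0)
    show "Pm \<subseteq> g0" by (rule Pm_g0)
    show "N \<in> span Pp" using n0_span_Pp AN(3) by blast
    show "\<theta> N \<in> span Pm" using th_n0 AN(3) by blast
    fix y z assume "y \<in> Pp" "z \<in> Pm"
    then obtain a b where yz: "y \<in> g0" "a > 0" "comm H0 y = a *\<^sub>R y" "z \<in> g0" "b < 0" "comm H0 z = b *\<^sub>R z"
      unfolding Pp_def Pm_def by blast
    have "a \<noteq> b" using yz(2,5) by simp
    then show "beta y z = 0" by (rule eig_orth[OF yz(1,4,3,6)])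
  qed
  have "beta A (A + A + N) = beta A (A + A) + beta A N"
    by (rule beta_add_right[OF Ag g0_add[OF Ag Ag] Ng])
  also have "beta A (A + A) = beta A A + beta A A"
    by (rule beta_add_right[OF Ag Ag Ag])
  finally have "beta A (A + A + N) = beta A A + beta A A + beta A N" .
  then have "beta A A = 0" using o1 o2 W by simp
  then have A0: "A = 0" using beta_eq0[OF Ag] by blast
  then have "\<theta> N = N" using W by simp
  then have "beta N N = 0" using o3 by simp
  then have "N = 0" using beta_eq0[OF Ng] by blast
  then show ?thesis using AN(1) A0 by simp
qed

lemma iwasawa_unique:
  assumes "K1 \<in> k0" "K2 \<in> k0" "X - K1 \<in> u0" "X - K2 \<in> u0"
  shows "K1 = K2"
proof -
  have "K1 - K2 \<in> k0" using assms(1,2) by (rule subspace_diff[OF k0_sub])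
  moreover have "(X - K2) - (X - K1) \<in> u0" using assms(3,4) subspace_diff[OF u0_sub] by blast
  then have "K1 - K2 \<in> u0" by (simp add: algebra_simps)
  ultimately have "K1 - K2 = 0" by (rule k0_u0_zero)
  then show ?thesis by simp
qed

lemma proj_eq:
  assumes "K \<in> k0" "X - K \<in> u0"
  shows "proj_k k0 u0 X = K"
  unfolding proj_k_def
proof (rule the_equality)
  show "K \<in> k0 \<and> X - K \<in> u0" using assms by blast
  fix K' assume "K' \<in> k0 \<and> X - K' \<in> u0"
  then show "K' = K" using iwasawa_unique[of K' K X] assms by blast
qed

end

lemma Abs_M_eqI: "Abs_M X = Abs_M Y \<Longrightarrow> X = Y" by (simp add: Abs_M_eq_iff)

lemma conj_comm:
  fixes m m' X Y :: "'n::finite cmat"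
  assumes "m' ** m = mat 1"
  shows "m ** comm X Y ** m' = comm (m ** X ** m') (m ** Y ** m')"
proof (rule Abs_M_eqI)
  have i: "Abs_M m' * Abs_M m = 1" using assms by (simp add: Abs_M_mult[symmetric] Abs_M_one)
  have "Abs_M m * Abs_M X * Abs_M m' * (Abs_M m * Abs_M Y * Abs_M m')
      = Abs_M m * Abs_M X * (Abs_M m' * Abs_M m) * Abs_M Y * Abs_M m'" by (simp add: mult.assoc)
  also have "\<dots> = Abs_M m * Abs_M X * Abs_M Y * Abs_M m'" using i by simp
  finally have 1: "Abs_M m * Abs_M X * Abs_M m' * (Abs_M m * Abs_M Y * Abs_M m') = Abs_M m * Abs_M X * Abs_M Y * Abs_M m'" .
  have "Abs_M m * Abs_M Y * Abs_M m' * (Abs_M m * Abs_M X * Abs_M m')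
      = Abs_M m * Abs_M Y * (Abs_M m' * Abs_M m) * Abs_M X * Abs_M m'" by (simp add: mult.assoc)
  also have "\<dots> = Abs_M m * Abs_M Y * Abs_M X * Abs_M m'" using i by simp
  finally have 2: "Abs_M m * Abs_M Y * Abs_M m' * (Abs_M m * Abs_M X * Abs_M m') = Abs_M m * Abs_M Y * Abs_M X * Abs_M m'" .
  have "Abs_M (m ** comm X Y ** m') = Abs_M m * Abs_M X * Abs_M Y * Abs_M m' - Abs_M m * Abs_M Y * Abs_M X * Abs_M m'"
    by (simp add: Abs_M_comm Abs_M_mult algebra_simps)
  also have "\<dots> = Abs_M (comm (m ** X ** m') (m ** Y ** m'))"
    by (simp only: Abs_M_comm Abs_M_mult 1 2)
  finally show "Abs_M (m ** comm X Y ** m') = Abs_M (comm (m ** X ** m') (m ** Y ** m'))" .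
qed

lemma conj_linear:
  fixes m m' :: "'n::finite cmat"
  shows "linear (\<lambda>Y. m ** Y ** m')"
proof (rule linearI)
  show "m ** (x + y) ** m' = m ** x ** m' + m ** y ** m'" for x y
    by (rule Abs_M_eqI) (simp add: Abs_M_mult Abs_M_add algebra_simps)
  show "m ** (c *\<^sub>R x) ** m' = c *\<^sub>R (m ** x ** m')" for c x
    by (rule Abs_M_eqI) (simp add: Abs_M_mult Abs_M_scaleR)
qed

lemma conj_cent:
  fixes m m' H Z :: "'n::finite cmat"
  assumes i1: "m ** m' = mat 1" and i2: "m' ** m = mat 1" and c: "m ** H ** m' = H"
  shows "comm H (m ** Z ** m') = m ** comm H Z ** m'"
proof -
  have "comm (m ** H ** m') (m ** Z ** m') = m ** comm H Z ** m'"
    using conj_comm[OF i2] by simp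
  then show ?thesis using c by simp
qed

theorem main:
  fixes G :: "'n::finite cmat set"
    and \<sigma> \<Theta> \<theta> :: "'n cmat \<Rightarrow> 'n cmat"
    and a0 :: "'n cmat set" and H0 :: "'n cmat"
  assumes A1: "complex_semisimple_group G"
    and A2: "antiholo_involution G \<sigma>"
    and A3: "cartan_involution_grp (fixed_points G \<sigma>) \<Theta> \<theta>"
    and A4: "max_abelian_in (ppart (lie_alg (fixed_points G \<sigma>)) \<theta>) a0"
    and A5: "regular_element (lie_alg (fixed_points G \<sigma>)) a0 H0"
  shows "\<forall>m\<in>{k\<in>fixed_points (fixed_points G \<sigma>) \<Theta>. \<forall>X\<in>a0. k ** X ** matrix_inv k = X}.
           \<forall>X\<in>lie_alg (fixed_points G \<sigma>).
             m ** X ** matrix_inv m \<in> lie_alg (fixed_points G \<sigma>) \<and>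
             m ** toda (kpart (lie_alg (fixed_points G \<sigma>)) \<theta>)
                       (upart (lie_alg (fixed_points G \<sigma>)) a0 H0) X ** matrix_inv m
             = toda (kpart (lie_alg (fixed_points G \<sigma>)) \<theta>)
                    (upart (lie_alg (fixed_points G \<sigma>)) a0 H0) (m ** X ** matrix_inv m)"
proof (intro ballI)
  define G0 where "G0 = fixed_points G \<sigma>"
  define g0 where "g0 = lie_alg G0"
  have cmgG: "closed_matrix_group G" using A1 by (simp add: complex_semisimple_group_def)
  have homs: "group_hom_on G \<sigma>" using A2 by (simp add: antiholo_involution_def)
  have cmg0: "closed_matrix_group G0" unfolding G0_def by (rule fixed_group[OF cmgG homs])
  have homT: "group_hom_on G0 \<Theta>" and diffT: "is_differential G0 \<Theta> \<theta>"
    and cart: "cartan_involution_alg g0 \<theta>"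
    using A3 by (simp_all add: cartan_involution_grp_def G0_def g0_def)
  interpret lc2 g0 \<theta> a0 H0
  proof (unfold_locales)
    show "subspace g0" unfolding g0_def by (rule lie_alg_subspace[OF cmg0])
    show "\<And>X Y. X \<in> g0 \<Longrightarrow> Y \<in> g0 \<Longrightarrow> comm X Y \<in> g0" unfolding g0_def by (rule lie_alg_comm[OF cmg0])
    show "cartan_involution_alg g0 \<theta>" by (rule cart)
    show "max_abelian_in (ppart g0 \<theta>) a0" using A4 by (simp add: g0_def G0_def)
    show "regular_element g0 a0 H0" using A5 by (simp add: g0_def G0_def)
  qed
  fix m X
  assume mM: "m \<in> {k\<in>fixed_points (fixed_points G \<sigma>) \<Theta>. \<forall>X\<in>a0. k ** X ** matrix_inv k = X}"
    and Xg0: "X \<in> lie_alg (fixed_points G \<sigma>)"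
  have X: "X \<in> g0" using Xg0 by (simp add: g0_def G0_def)
  have mG0: "m \<in> G0" and Tm: "\<Theta> m = m" and cent: "\<And>H. H \<in> a0 \<Longrightarrow> m ** H ** matrix_inv m = H"
    using mM by (auto simp: fixed_points_def G0_def)
  define m' where "m' = matrix_inv m"
  have m'G0: "m' \<in> G0" and minv: "invertible m"
    using cmg0 mG0 by (auto simp: closed_matrix_group_def m'_def)
  have i1: "m ** m' = mat 1" and i2: "m' ** m = mat 1"
    using matrix_inv_props[OF minv] by (simp_all add: m'_def)
  have Tm': "\<Theta> m' = m'" unfolding m'_def using hom_inv[OF cmg0 homT mG0] Tm by simp
  define Ad where "Ad = (\<lambda>Y. m ** Y ** m')"
  have Ad_g0: "Ad Y \<in> g0" if "Y \<in> g0" for Y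
    unfolding Ad_def g0_def by (rule lie_alg_conj[OF cmg0 mG0 m'G0 i1 i2 that[unfolded g0_def]])
  have Ad_scale: "t *\<^sub>R Ad Y = Ad (t *\<^sub>R Y)" for t Y
    by (simp add: Ad_def mat_scaleR_mult_left mat_scaleR_mult_right)
  have mexpAd: "mexp (Ad Y) = m ** mexp Y ** m'" for Y
    unfolding Ad_def by (rule mexp_conj[OF i1 i2])
  have thAd: "\<theta> (Ad Y) = Ad (\<theta> Y)" if Y: "Y \<in> g0" for Y
  proof (rule mexp_inj, rule allI)
    fix t :: real
    have Yt: "mexp (t *\<^sub>R Y) \<in> G0" using Y by (simp add: g0_def lie_alg_def)
    have dY: "\<Theta> (mexp (t *\<^sub>R Y)) = mexp (t *\<^sub>R \<theta> Y)"
      using diffT Y by (simp add: is_differential_def g0_def)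
    have dAY: "\<Theta> (mexp (t *\<^sub>R Ad Y)) = mexp (t *\<^sub>R \<theta> (Ad Y))"
      using diffT Ad_g0[OF Y] by (simp add: is_differential_def g0_def)
    have prod: "m ** mexp (t *\<^sub>R Y) \<in> G0" using cmg0 mG0 Yt by (simp add: closed_matrix_group_def)
    have "\<Theta> (m ** mexp (t *\<^sub>R Y) ** m') = \<Theta> (m ** mexp (t *\<^sub>R Y)) ** \<Theta> m'"
      using homT prod m'G0 by (simp add: group_hom_on_def)
    also have "\<dots> = \<Theta> m ** \<Theta> (mexp (t *\<^sub>R Y)) ** \<Theta> m'"
      using homT mG0 Yt by (simp add: group_hom_on_def)
    also have "\<dots> = m ** mexp (t *\<^sub>R \<theta> Y) ** m'" using Tm Tm' dY by simp
    finally have e: "\<Theta> (m ** mexp (t *\<^sub>R Y) ** m') = m ** mexp (t *\<^sub>R \<theta> Y) ** m'" .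
    have "mexp (t *\<^sub>R \<theta> (Ad Y)) = \<Theta> (mexp (t *\<^sub>R Ad Y))" using dAY by simp
    also have "\<dots> = \<Theta> (m ** mexp (t *\<^sub>R Y) ** m')" by (simp add: Ad_scale mexpAd)
    also have "\<dots> = mexp (t *\<^sub>R Ad (\<theta> Y))" using e by (simp add: Ad_scale mexpAd)
    finally show "mexp (t *\<^sub>R \<theta> (Ad Y)) = mexp (t *\<^sub>R Ad (\<theta> Y))" .
  qed
  have Ad_k0: "Ad Y \<in> k0" if "Y \<in> k0" for Y
    using that Ad_g0 thAd by (auto simp: kpart_def)
  have lAd: "linear Ad" unfolding Ad_def by (rule conj_linear)
  have Ad_root: "Ad Z \<in> root_space g0 a0 r" if Z: "Z \<in> root_space g0 a0 r" for Z r
  proof -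
    have Zg: "Z \<in> g0" using Z by (simp add: root_space_def)
    have "comm H (Ad Z) = r H *\<^sub>R Ad Z" if H: "H \<in> a0" for H
    proof -
      have "comm H (Ad Z) = m ** comm H Z ** m'"
        unfolding Ad_def by (rule conj_cent[OF i1 i2 cent[OF H, folded m'_def]])
      also have "comm H Z = r H *\<^sub>R Z" using Z H by (simp add: root_space_def)
      finally show ?thesis by (simp add: Ad_def mat_scaleR_mult_left mat_scaleR_mult_right)
    qed
    then show ?thesis using Ad_g0[OF Zg] by (simp add: root_space_def)
  qed
  have Ad_n0: "Ad N \<in> n0" if N: "N \<in> n0" for N
  proof -
    let ?S = "\<Union>{root_space g0 a0 r |r. restricted_root g0 a0 r \<and> r H0 > 0}"
    have "Ad ` ?S \<subseteq> ?S" using Ad_root by blast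
    then have "span (Ad ` ?S) \<subseteq> span ?S" by (rule span_mono)
    moreover have "Ad N \<in> Ad ` span ?S" using N by (simp add: npart_def)
    moreover have "span (Ad ` ?S) = Ad ` span ?S" by (rule linear_span_image[OF lAd])
    ultimately have "Ad N \<in> span ?S" by blast
    then show ?thesis by (simp add: npart_def)
  qed
  have Ad_u0: "Ad Y \<in> u0" if Y: "Y \<in> u0" for Y
  proof -
    obtain A N where AN: "Y = A + N" "A \<in> a0" "N \<in> n0" using Y unfolding upart_def by blast
    have "Ad Y = Ad A + Ad N" using AN by (simp add: linear_add[OF lAd])
    then have "Ad Y = A + Ad N" using cent[OF AN(2)] by (simp add: Ad_def m'_def)
    then show ?thesis using AN Ad_n0 unfolding upart_def by blast
  qed
  obtain K where K: "K \<in> k0" "X - K \<in> u0" using iwasawa_exists[OF X] by blast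
  have pX: "proj_k k0 u0 X = K" by (rule proj_eq[OF K])
  have "Ad X - Ad K = Ad (X - K)" by (simp add: linear_diff[OF lAd])
  then have "Ad X - Ad K \<in> u0" using Ad_u0[OF K(2)] by simp
  then have pAX: "proj_k k0 u0 (Ad X) = Ad K" by (rule proj_eq[OF Ad_k0[OF K(1)]])
  have "m ** toda k0 u0 X ** m' = toda k0 u0 (Ad X)"
    unfolding toda_def pX pAX unfolding Ad_def by (rule conj_comm[OF i2])
  then show "m ** X ** matrix_inv m \<in> lie_alg (fixed_points G \<sigma>) \<and>
             m ** toda (kpart (lie_alg (fixed_points G \<sigma>)) \<theta>)
                       (upart (lie_alg (fixed_points G \<sigma>)) a0 H0) X ** matrix_inv m
             = toda (kpart (lie_alg (fixed_points G \<sigma>)) \<theta>)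
                    (upart (lie_alg (fixed_points G \<sigma>)) a0 H0) (m ** X ** matrix_inv m)"
    using Ad_g0[OF X] by (simp add: Ad_def m'_def g0_def G0_def)
qed

theorem lemma4p4:
  fixes G :: "'n::finite cmat set"
    and \<sigma> \<Theta> \<theta> :: "'n cmat \<Rightarrow> 'n cmat"
    and a0 :: "'n cmat set" and H0 :: "'n cmat"
  assumes "complex_semisimple_group G"
    and "antiholo_involution G \<sigma>"
    and "cartan_involution_grp (fixed_points G \<sigma>) \<Theta> \<theta>"
    and "max_abelian_in (ppart (lie_alg (fixed_points G \<sigma>)) \<theta>) a0"
    and "regular_element (lie_alg (fixed_points G \<sigma>)) a0 H0"
  shows "\<forall>m\<in>{k\<in>fixed_points (fixed_points G \<sigma>) \<Theta>. \<forall>X\<in>a0. k ** X ** matrix_inv k = X}.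
           \<forall>X\<in>lie_alg (fixed_points G \<sigma>).
             m ** X ** matrix_inv m \<in> lie_alg (fixed_points G \<sigma>) \<and>
             m ** toda (kpart (lie_alg (fixed_points G \<sigma>)) \<theta>)
                       (upart (lie_alg (fixed_points G \<sigma>)) a0 H0) X ** matrix_inv m
             = toda (kpart (lie_alg (fixed_points G \<sigma>)) \<theta>)
                    (upart (lie_alg (fixed_points G \<sigma>)) a0 H0) (m ** X ** matrix_inv m)"
    using main[OF assms] .

end
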